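(* Let $\Omega\subset\mathbb{C}^n$ be a domain with $C^4$ boundary, $p\in b\Omega$ and $X,Y\in T_p(b\Omega)$. If $L,L',\tilde L,\tilde L'\in\tilde K^{1,0}_p$ satisfy $L(p)=\tilde L(p)$, $L'(p)=\tilde L'(p)$ and $L(p),L'(p)\in K^{1,0}_{p,X}\cap K^{1,0}_{p,Y}$, then $\tau^4_p(X,Y,L,\bar L')=\tau^4_p(X,Y,\tilde L,\bar{\tilde L}')$. That is, $\tau^4_p(X,Y,\cdot,\cdot)$ is a well-defined tensor on $(K^{1,0}_{p,X}\cap K^{1,0}_{p,Y})\times(K^{0,1}_{p,X}\cap K^{0,1}_{p,Y})$.
   Context: Use the Euclidean metric on $\mathbb{C}^n$ normalized so $|dz_j|=1$; $\rho$ is a $C^4$ defining function for $\Omega$ normalized so $|d\rho|=1$ on $b\Omega$. $T_p(b\Omega)$ is the real tangent space, $T^{1,0}_p(b\Omega)=\{\sum_j a^j\partial/\partial z_j:\sum_j a^j\partial\rho/\partial z_j(p)=0\}$. The Levi form is $\mathcal{L}(L,\bar L')=\sum_{j,k}\frac{\partial^2\rho}{\partial z_j\partial\bar z_k}a^j\bar b^k$ on $T^{1,0}(b\Omega)$, with eigenvalues $\mu_1\leq\dots\leq\mu_{n-1}$; $K^{1,0}_p$ is its kernel at $p$. For real $X\in T_p(b\Omega)$ and $L,L'\in K^{1,0}_p$, $\tau^3_p(X,L,\bar L')=X(\mathcal{L}(L,\bar L'))|_p$, and $K^{1,0}_{p,X}=\{L\in K^{1,0}_p:\tau^3_p(X,L,\bar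 L')=0\ \forall L'\in K^{1,0}_p\}$; $K^{0,1}_{p,X}$ is its complex conjugate. Let $U_p$ be a neighborhood of $p$ in $b\Omega$ on which $\mu_k\neq\mu_j$ whenever $\mu_k(p)\neq0$ and $\mu_j(p)=0$; $\tilde K^{1,0}_p$ is the space of sections of $T^{1,0}(b\Omega)$ over $U_p$ with $C^2$ coefficients lying pointwise in the span of the eigenvectors of $\mathcal{L}$ for the eigenvalues $\mu_j$ with $\mu_j(p)=0$. With $\nabla$ the Euclidean connection, $\nabla^b_XY$ the tangential part of $\nabla_XY$ for vector fields $X,Y$ tangent to $b\Omega$, and $\mathrm{Hess}^b(X,Y)=XY-\nabla^b_XY$, define for $X,Y\in T_p(b\Omega)$ and $L,L'\in\tilde K^{1,0}_p$: $\tau^4_p(X,Y,L,\bar L')=(\mathrm{Hess}^b(X,Y)\mathcal{L}(L,\bar L'))(p)$. *)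

theory Defs
  imports "HOL-Analysis.Analysis"
begin

fun Ck :: "nat \<Rightarrow> 'a::real_normed_vector set \<Rightarrow> ('a \<Rightarrow> 'b::real_normed_vector) \<Rightarrow> bool" where
  "Ck 0 S f = continuous_on S f"
| "Ck (Suc k) S f = ((\<forall>x\<in>S. f differentiable (at x)) \<and>
                      (\<forall>v. Ck k S (\<lambda>x. frechet_derivative f (at x) v)))"

definition Dir :: "('a::real_normed_vector \<Rightarrow> 'b::real_normed_vector) \<Rightarrow> 'a \<Rightarrow> 'a \<Rightarrow> 'b" where
  "Dir f z v = frechet_derivative f (at z) v"

text \<open>Wirtinger derivatives on C^n (vectors in C^n are elements of complex^'n).\<close>
definition dz :: "'n::finite \<Rightarrow> (complex^'n \<Rightarrow> complex) \<Rightarrow> complex^'n \<Rightarrow> complex" where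
  "dz j f z = (Dir f z (axis j 1) - \<i> * Dir f z (axis j \<i>)) / 2"

definition dzbar :: "'n::finite \<Rightarrow> (complex^'n \<Rightarrow> complex) \<Rightarrow> complex^'n \<Rightarrow> complex" where
  "dzbar j f z = (Dir f z (axis j 1) + \<i> * Dir f z (axis j \<i>)) / 2"

definition cplx :: "(complex^'n \<Rightarrow> real) \<Rightarrow> complex^'n \<Rightarrow> complex" where
  "cplx \<rho> = (\<lambda>w. complex_of_real (\<rho> w))"

text \<open>|d rho| in the metric with |dz_j| = 1: |d rho|^2 = sum |rho_j|^2 + |rho_{jbar}|^2.\<close>
definition dnorm :: "(complex^'n::finite \<Rightarrow> real) \<Rightarrow> complex^'n \<Rightarrow> real" where
  "dnorm \<rho> z = sqrt (\<Sum>j\<in>UNIV. (cmod (dz j (cplx \<rho>) z))\<^sup>2 + (cmod (dzbar j (cplx \<rho>) z))\<^sup>2)"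

definition defining_function :: "(complex^'n::finite) set \<Rightarrow> (complex^'n \<Rightarrow> real) \<Rightarrow> (complex^'n) set \<Rightarrow> bool" where
  "defining_function \<Omega> \<rho> V \<longleftrightarrow> open V \<and> frontier \<Omega> \<subseteq> V \<and> Ck 4 V \<rho> \<and>
     (\<forall>z\<in>V. z \<in> \<Omega> \<longleftrightarrow> \<rho> z < 0) \<and> (\<forall>z\<in>frontier \<Omega>. dnorm \<rho> z = 1)"

text \<open>Real tangent space T_z(b Omega) (as real vectors in C^n = R^2n).\<close>
definition Tb :: "(complex^'n::finite \<Rightarrow> real) \<Rightarrow> complex^'n \<Rightarrow> (complex^'n) set" where
  "Tb \<rho> z = {v. Dir \<rho> z v = 0}"

text \<open>T^{1,0}_z(b Omega), vectors given by their coefficients a^j.\<close>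
definition T10 :: "(complex^'n::finite \<Rightarrow> real) \<Rightarrow> complex^'n \<Rightarrow> (complex^'n) set" where
  "T10 \<rho> z = {a. (\<Sum>j\<in>UNIV. a$j * dz j (cplx \<rho>) z) = 0}"

definition levi_coef :: "(complex^'n::finite \<Rightarrow> real) \<Rightarrow> complex^'n \<Rightarrow> 'n \<Rightarrow> 'n \<Rightarrow> complex" where
  "levi_coef \<rho> z j k = dz j (dzbar k (cplx \<rho>)) z"

definition levi :: "(complex^'n::finite \<Rightarrow> real) \<Rightarrow> complex^'n \<Rightarrow> complex^'n \<Rightarrow> complex^'n \<Rightarrow> complex" where
  "levi \<rho> z a b = (\<Sum>j\<in>UNIV. \<Sum>k\<in>UNIV. levi_coef \<rho> z j k * a$j * cnj (b$k))"

text \<open>Hermitian inner product with |d/dz_j| = 1.\<close>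
definition herm :: "complex^'n::finite \<Rightarrow> complex^'n \<Rightarrow> complex" where
  "herm a b = (\<Sum>j\<in>UNIV. a$j * cnj (b$j))"

definition cspan :: "(complex^'n::finite) set \<Rightarrow> (complex^'n) set" where
  "cspan S = {v. \<exists>F c. finite F \<and> F \<subseteq> S \<and> v = (\<Sum>a\<in>F. c a *s a)}"

text \<open>mu 0 <= ... <= mu (n-2) are the eigenvalues (with multiplicity) of the Levi form on
  T^{1,0}_z: there is an orthonormal basis of T^{1,0}_z diagonalizing it.\<close>
definition levi_eigenvalues :: "(complex^'n::finite \<Rightarrow> real) \<Rightarrow> complex^'n \<Rightarrow> (nat \<Rightarrow> real) \<Rightarrow> bool" where
  "levi_eigenvalues \<rho> z \<mu> \<longleftrightarrow>
     (\<forall>i j. i \<le> j \<longrightarrow> j < CARD('n) - 1 \<longrightarrow> \<mu> i \<le> \<mu> j) \<and>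
     (\<exists>e :: nat \<Rightarrow> complex^'n.
        (\<forall>i < CARD('n) - 1. e i \<in> T10 \<rho> z) \<and>
        T10 \<rho> z \<subseteq> cspan (e ` {..<CARD('n) - 1}) \<and>
        (\<forall>i < CARD('n) - 1. \<forall>k < CARD('n) - 1. herm (e i) (e k) = (if i = k then 1 else 0)) \<and>
        (\<forall>i < CARD('n) - 1. \<forall>k < CARD('n) - 1.
            levi \<rho> z (e i) (e k) = (if i = k then complex_of_real (\<mu> i) else 0)))"

definition levi_eigvec :: "(complex^'n::finite \<Rightarrow> real) \<Rightarrow> complex^'n \<Rightarrow> real \<Rightarrow> complex^'n \<Rightarrow> bool" where
  "levi_eigvec \<rho> z lam a \<longleftrightarrow> a \<in> T10 \<rho> z \<and> a \<noteq> 0 \<and>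
     (\<forall>b\<in>T10 \<rho> z. levi \<rho> z a b = complex_of_real lam * herm a b)"

definition Kker :: "(complex^'n::finite \<Rightarrow> real) \<Rightarrow> complex^'n \<Rightarrow> (complex^'n) set" where
  "Kker \<rho> p = {a \<in> T10 \<rho> p. \<forall>b\<in>T10 \<rho> p. levi \<rho> p a b = 0}"

text \<open>K^{1,0}_{p,X}: tau^3_p(X, L, L'bar) = X(L(L, L'bar))|_p, computed with arbitrary C^1
  sections of T^{1,0}(b Omega) near p extending the given vectors.\<close>
definition KX :: "(complex^'n::finite) set \<Rightarrow> (complex^'n \<Rightarrow> real) \<Rightarrow> complex^'n \<Rightarrow> complex^'n \<Rightarrow> (complex^'n) set" where
  "KX \<Omega> \<rho> p X = {a \<in> Kker \<rho> p. \<forall>b\<in>Kker \<rho> p. \<forall>W La Lb.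
      open W \<and> p \<in> W \<and> Ck 1 W La \<and> Ck 1 W Lb \<and> La p = a \<and> Lb p = b \<and>
      (\<forall>z\<in>W \<inter> frontier \<Omega>. La z \<in> T10 \<rho> z \<and> Lb z \<in> T10 \<rho> z) \<longrightarrow>
      Dir (\<lambda>z. levi \<rho> z (La z) (Lb z)) p X = 0}"

text \<open>Elements of tilde K^{1,0}_p over U_p = U \<inter> b Omega (U open in C^n): C^2 sections lying
  pointwise in the span of eigenvectors for the eigenvalues mu_j with mu_j(p) = 0.\<close>
definition Ktilde :: "(complex^'n::finite) set \<Rightarrow> (complex^'n \<Rightarrow> real) \<Rightarrow> (complex^'n \<Rightarrow> nat \<Rightarrow> real)
    \<Rightarrow> complex^'n \<Rightarrow> (complex^'n) set \<Rightarrow> (complex^'n \<Rightarrow> complex^'n) set" where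
  "Ktilde \<Omega> \<rho> \<mu> p U = {L. Ck 2 U L \<and> (\<forall>z\<in>U \<inter> frontier \<Omega>.
      L z \<in> cspan {a. \<exists>j < CARD('n) - 1. \<mu> p j = 0 \<and> levi_eigvec \<rho> z (\<mu> z j) a})}"

definition tangent_field :: "(complex^'n::finite) set \<Rightarrow> (complex^'n \<Rightarrow> real) \<Rightarrow> (complex^'n) set
    \<Rightarrow> (complex^'n \<Rightarrow> complex^'n) \<Rightarrow> bool" where
  "tangent_field \<Omega> \<rho> U F \<longleftrightarrow> Ck 1 U F \<and> (\<forall>z\<in>U \<inter> frontier \<Omega>. F z \<in> Tb \<rho> z)"

definition grad :: "(complex^'n::finite \<Rightarrow> real) \<Rightarrow> complex^'n \<Rightarrow> complex^'n" where
  "grad \<rho> z = (\<chi> j. complex_of_real (Dir \<rho> z (axis j 1)) + \<i> * complex_of_real (Dir \<rho> z (axis j \<i>)))"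

definition tang :: "(complex^'n::finite \<Rightarrow> real) \<Rightarrow> complex^'n \<Rightarrow> complex^'n \<Rightarrow> complex^'n" where
  "tang \<rho> z v = v - (inner v (grad \<rho> z) / inner (grad \<rho> z) (grad \<rho> z)) *\<^sub>R grad \<rho> z"

text \<open>tau^4_p(X,Y,L,L'bar) = (Hess^b(X,Y) L(L,L'bar))(p) = XY g - (nabla^b_X Y) g at p,
  where Xf, Yf are tangent vector fields (extending X, Y).\<close>
definition tau4 :: "(complex^'n::finite \<Rightarrow> real) \<Rightarrow> (complex^'n \<Rightarrow> complex^'n) \<Rightarrow> (complex^'n \<Rightarrow> complex^'n)
    \<Rightarrow> (complex^'n \<Rightarrow> complex^'n) \<Rightarrow> (complex^'n \<Rightarrow> complex^'n) \<Rightarrow> complex^'n \<Rightarrow> complex" where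
  "tau4 \<rho> Xf Yf L L' p =
     (let g = (\<lambda>z. levi \<rho> z (L z) (L' z));
          Yg = (\<lambda>z. Dir g z (Yf z));
          nabla = Dir Yf p (Xf p)
      in Dir Yg p (Xf p) - Dir g p (tang \<rho> p nabla))"

end

theory Submission
  imports Defs
begin


lemma Dir_eq: "Dir f x = frechet_derivative f (at x)"
  by (rule ext) (simp add: Dir_def)

lemma Ck_Suc_D: "Ck (Suc k) S f \<Longrightarrow> x \<in> S \<Longrightarrow> (f has_derivative Dir f x) (at x)"
  using frechet_derivative_works by (auto simp: Dir_eq)

lemma Ck_Suc_diff: "Ck (Suc k) S f \<Longrightarrow> x \<in> S \<Longrightarrow> f differentiable (at x)"
  by simp

lemma Ck_Suc_Dir: "Ck (Suc k) S f \<Longrightarrow> Ck k S (\<lambda>x. Dir f x v)"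
  by (simp add: Dir_def)

lemma Ck_mono: "Ck (Suc k) S f \<Longrightarrow> Ck k S f"
proof (induction k arbitrary: f)
  case 0
  then show ?case
    by (auto intro!: continuous_at_imp_continuous_on differentiable_imp_continuous_within)
next
  case (Suc k)
  then show ?case by auto
qed

lemma Ck_le: "j \<le> k \<Longrightarrow> Ck k S f \<Longrightarrow> Ck j S f"
proof (induction k arbitrary: j)
  case 0 then show ?case by simp
next
  case (Suc k)
  show ?case
  proof (cases "j = Suc k")
    case True then show ?thesis using Suc.prems by simp
  next
    case False
    then have "j \<le> k" using Suc.prems by simp
    moreover have "Ck k S f" using Ck_mono Suc.prems by blast
    ultimately show ?thesis using Suc.IH by blast
  qed
qed

lemma Ck_subset: "Ck k S f \<Longrightarrow> T \<subseteq> S \<Longrightarrow> Ck k T f"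
proof (induction k arbitrary: f)
  case 0 then show ?case using continuous_on_subset by auto
next
  case (Suc k) then show ?case by auto
qed

lemma Dir_cong:
  assumes "open S" "x \<in> S" "\<And>y. y \<in> S \<Longrightarrow> f y = g y"
  shows "Dir f x = Dir g x"
proof -
  have "\<And>f'. (f has_derivative f') (at x) = (g has_derivative f') (at x)"
  proof
    fix f' assume "(f has_derivative f') (at x)"
    then show "(g has_derivative f') (at x)"
      by (rule has_derivative_transform_within_open[OF _ assms(1,2)]) (simp add: assms(3))
  next
    fix f' assume "(g has_derivative f') (at x)"
    then show "(f has_derivative f') (at x)"
      by (rule has_derivative_transform_within_open[OF _ assms(1,2)]) (simp add: assms(3))
  qed
  then show ?thesis by (simp add: Dir_eq frechet_derivative_def)
qed

lemma diff_cong: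
  assumes "open S" "x \<in> S" "\<And>y. y \<in> S \<Longrightarrow> f y = g y" "f differentiable (at x)"
  shows "g differentiable (at x)"
proof -
  obtain f' where "(f has_derivative f') (at x)" using assms(4) unfolding differentiable_def by blast
  then have "(g has_derivative f') (at x)"
    by (rule has_derivative_transform_within_open[OF _ assms(1,2)]) (simp add: assms(3))
  then show ?thesis unfolding differentiable_def by blast
qed

lemma Ck_cong:
  assumes "open S" "\<And>x. x \<in> S \<Longrightarrow> f x = g x"
  shows "Ck k S f = Ck k S g"
  using assms(2)
proof (induction k arbitrary: f g)
  case 0 then show ?case using continuous_on_cong by auto
next
  case (Suc k)
  have d: "\<And>x. x \<in> S \<Longrightarrow> (f differentiable (at x)) = (g differentiable (at x))"
    using diff_cong[OF assms(1), of _ f g] diff_cong[OF assms(1), of _ g f] Suc.prems by auto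
  have e: "\<And>x. x \<in> S \<Longrightarrow> Dir f x = Dir g x"
    using Dir_cong[OF assms(1), of _ f g] Suc.prems by auto
  have "\<And>v. Ck k S (\<lambda>x. Dir f x v) = Ck k S (\<lambda>x. Dir g x v)"
    by (rule Suc.IH) (simp add: e)
  then show ?case using d by (simp add: Dir_eq[symmetric])
qed

lemma Dir_has: "(f has_derivative f') (at x) \<Longrightarrow> Dir f x = f'"
  by (simp add: Dir_eq frechet_derivative_at[symmetric])

lemma Ck_const: "Ck k S (\<lambda>x. c)"
proof (induction k arbitrary: c)
  case 0 then show ?case by simp
next
  case (Suc k)
  have "\<And>x v. Dir (\<lambda>x. c) x v = 0" by (simp add: Dir_def)
  then show ?case using Suc by (simp add: Dir_eq[symmetric])
qed

lemma Ck_add: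
  assumes "open S"
  shows "Ck k S f \<Longrightarrow> Ck k S g \<Longrightarrow> Ck k S (\<lambda>x. f x + g x)"
proof (induction k arbitrary: f g)
  case 0 then show ?case by (simp add: continuous_on_add)
next
  case (Suc k)
  have e: "\<And>x v. x \<in> S \<Longrightarrow> Dir (\<lambda>x. f x + g x) x v = Dir f x v + Dir g x v"
    using Suc.prems by (simp add: Dir_has[OF has_derivative_add[OF Ck_Suc_D Ck_Suc_D]])
  have "Ck k S (\<lambda>x. Dir (\<lambda>x. f x + g x) x v)" for v
  proof -
    have "Ck k S (\<lambda>x. Dir (\<lambda>x. f x + g x) x v) = Ck k S (\<lambda>x. Dir f x v + Dir g x v)"
      by (rule Ck_cong[OF assms]) (simp add: e)
    moreover have "Ck k S (\<lambda>x. Dir f x v + Dir g x v)"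
      using Suc.IH Suc.prems by (simp add: Dir_eq[symmetric])
    ultimately show ?thesis by simp
  qed
  then show ?case using Suc.prems by (simp add: Dir_eq[symmetric])
qed

lemma Ck_linear:
  assumes "open S" "bounded_linear T"
  shows "Ck k S f \<Longrightarrow> Ck k S (\<lambda>x. T (f x))"
proof (induction k arbitrary: f)
  case 0 then show ?case
    using continuous_on_compose2[OF linear_continuous_on[OF assms(2)]] by auto
next
  case (Suc k)
  have e: "\<And>x v. x \<in> S \<Longrightarrow> Dir (\<lambda>x. T (f x)) x v = T (Dir f x v)"
    using Suc.prems by (simp add: Dir_has[OF bounded_linear.has_derivative[OF assms(2) Ck_Suc_D]])
  have "Ck k S (\<lambda>x. Dir (\<lambda>x. T (f x)) x v)" for v
  proof -
    have "Ck k S (\<lambda>x. Dir (\<lambda>x. T (f x)) x v) = Ck k S (\<lambda>x. T (Dir f x v))"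
      by (rule Ck_cong[OF assms(1)]) (simp add: e)
    moreover have "Ck k S (\<lambda>x. T (Dir f x v))"
      using Suc.IH Suc.prems by (simp add: Dir_eq[symmetric])
    ultimately show ?thesis by simp
  qed
  moreover have "\<And>x. x \<in> S \<Longrightarrow> (\<lambda>x. T (f x)) differentiable (at x)"
    using Suc.prems bounded_linear.has_derivative[OF assms(2) Ck_Suc_D] differentiable_def by blast
  ultimately show ?case by (simp add: Dir_eq[symmetric])
qed

lemma Ck_bilinear:
  assumes "open S" "bounded_bilinear bil"
  shows "Ck k S f \<Longrightarrow> Ck k S g \<Longrightarrow> Ck k S (\<lambda>x. bil (f x) (g x))"
proof (induction k arbitrary: f g)
  case 0 then show ?case
    using bounded_bilinear.continuous_on[OF assms(2)] by auto
next
  case (Suc k)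
  have e: "\<And>x v. x \<in> S \<Longrightarrow> Dir (\<lambda>x. bil (f x) (g x)) x v = bil (f x) (Dir g x v) + bil (Dir f x v) (g x)"
    using Suc.prems by (simp add: Dir_has[OF bounded_bilinear.FDERIV[OF assms(2) Ck_Suc_D Ck_Suc_D]])
  have fk: "Ck k S f" "Ck k S g" using Ck_mono Suc.prems by blast+
  have bb: "Ck k S (\<lambda>x. bil (f x) (Dir g x v) + bil (Dir f x v) (g x))" for v
  proof (rule Ck_add[OF assms(1)])
    show "Ck k S (\<lambda>x. bil (f x) (Dir g x v))" by (rule Suc.IH[OF fk(1) Ck_Suc_Dir[OF Suc.prems(2)]])
    show "Ck k S (\<lambda>x. bil (Dir f x v) (g x))" by (rule Suc.IH[OF Ck_Suc_Dir[OF Suc.prems(1)] fk(2)])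
  qed
  have "Ck k S (\<lambda>x. Dir (\<lambda>x. bil (f x) (g x)) x v)" for v
  proof -
    have "Ck k S (\<lambda>x. Dir (\<lambda>x. bil (f x) (g x)) x v) = Ck k S (\<lambda>x. bil (f x) (Dir g x v) + bil (Dir f x v) (g x))"
      by (rule Ck_cong[OF assms(1)]) (simp add: e)
    then show ?thesis using bb by simp
  qed
  moreover have "\<And>x. x \<in> S \<Longrightarrow> (\<lambda>x. bil (f x) (g x)) differentiable (at x)"
    using Suc.prems bounded_bilinear.FDERIV[OF assms(2) Ck_Suc_D Ck_Suc_D] differentiable_def by blast
  ultimately show ?case by (simp add: Dir_eq[symmetric])
qed

lemma Ck_sum:
  assumes "open S" "finite A"
  shows "(\<And>i. i \<in> A \<Longrightarrow> Ck k S (f i)) \<Longrightarrow> Ck k S (\<lambda>x. \<Sum>i\<in>A. f i x)"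
  using assms(2)
proof (induction A rule: finite_induct)
  case empty then show ?case by (simp add: Ck_const)
next
  case (insert a A)
  then show ?case by (simp, intro Ck_add[OF assms(1)]) auto
qed

lemma Ck_mult:
  fixes f g :: "'a::real_normed_vector \<Rightarrow> 'b::real_normed_algebra"
  shows "open S \<Longrightarrow> Ck k S f \<Longrightarrow> Ck k S g \<Longrightarrow> Ck k S (\<lambda>x. f x * g x)"
  using Ck_bilinear[OF _ bounded_bilinear_mult] by blast

lemma Ck_cnj: fixes S :: "'a::real_normed_vector set" shows "open S \<Longrightarrow> Ck k S f \<Longrightarrow> Ck k S (\<lambda>x. cnj (f x))"
  using Ck_linear[OF _ bounded_linear_cnj] by blast

lemma Ck_of_real: fixes S :: "'a::real_normed_vector set" and f :: "'a \<Rightarrow> real" shows "open S \<Longrightarrow> Ck k S f \<Longrightarrow> Ck k S (\<lambda>x. complex_of_real (f x))"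
  using Ck_linear[OF _ bounded_linear_of_real] by blast

lemma Ck_minus: fixes S :: "'a::real_normed_vector set" and f :: "'a \<Rightarrow> 'b::real_normed_vector" shows "open S \<Longrightarrow> Ck k S f \<Longrightarrow> Ck k S g \<Longrightarrow> Ck k S (\<lambda>x. f x - g x)"
  using Ck_add[of S k f "\<lambda>x. - g x"] Ck_linear[OF _ bounded_linear_minus[OF bounded_linear_ident], of S k g]
  by simp

lemma DIRF:
  fixes f :: "'a::euclidean_space \<Rightarrow> 'b::real_normed_vector"
  assumes "open S" "p \<in> S" "\<And>z. z \<in> S \<Longrightarrow> f differentiable (at z)"
    "\<And>b. b \<in> Basis \<Longrightarrow> (\<lambda>z. Dir f z b) differentiable (at p)"
    "W differentiable (at p)"
  shows "(\<lambda>z. Dir f z (W z)) differentiable (at p)"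
proof -
  have eq: "Dir f z (W z) = (\<Sum>b\<in>Basis. (W z \<bullet> b) *\<^sub>R Dir f z b)" if "z \<in> S" for z
  proof -
    have lin: "linear (Dir f z)" using assms(3)[OF that] linear_frechet_derivative by (simp add: Dir_eq)
    have "Dir f z (W z) = Dir f z (\<Sum>b\<in>Basis. (W z \<bullet> b) *\<^sub>R b)" by (simp add: euclidean_representation)
    also have "\<dots> = (\<Sum>b\<in>Basis. (W z \<bullet> b) *\<^sub>R Dir f z b)"
      using lin by (simp add: linear_sum linear_scale)
    finally show ?thesis .
  qed
  have "(\<lambda>z. \<Sum>b\<in>Basis. (W z \<bullet> b) *\<^sub>R Dir f z b) differentiable (at p)"
    using assms(4,5) by (auto intro!: differentiable_sum differentiable_scaleR differentiable_inner)
  then show ?thesis using diff_cong[OF assms(1,2), of "\<lambda>z. \<Sum>b\<in>Basis. (W z \<bullet> b) *\<^sub>R Dir f z b"] eq by auto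
qed


definition sesq :: "complex^'n::finite^'n \<Rightarrow> complex^'n \<Rightarrow> complex^'n \<Rightarrow> complex" where
  "sesq C a b = (\<Sum>j\<in>UNIV. \<Sum>k\<in>UNIV. C$j$k * a$j * cnj (b$k))"

lemma hd_nth: "(f has_derivative f') F \<Longrightarrow> ((\<lambda>x. f x $ i) has_derivative (\<lambda>h. f' h $ i)) F"
  using bounded_linear.has_derivative[OF bounded_linear_vec_nth] by blast

lemma sesq_add1: "sesq (C + C') a b = sesq C a b + sesq C' a b"
  by (simp add: sesq_def sum.distrib ring_distribs)
lemma sesq_add2: "sesq C (a + a') b = sesq C a b + sesq C a' b"
  by (simp add: sesq_def sum.distrib ring_distribs)
lemma sesq_add3: "sesq C a (b + b') = sesq C a b + sesq C a b'"
  by (simp add: sesq_def sum.distrib ring_distribs)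
lemma sesq_diff2: "sesq C (a - a') b = sesq C a b - sesq C a' b"
  by (simp add: sesq_def sum_subtractf ring_distribs)
lemma sesq_diff3: "sesq C a (b - b') = sesq C a b - sesq C a b'"
  by (simp add: sesq_def sum_subtractf ring_distribs)
lemma sesq_zero2[simp]: "sesq C 0 b = 0"
  by (simp add: sesq_def)
lemma sesq_zero3[simp]: "sesq C a 0 = 0"
  by (simp add: sesq_def)
lemma sesq_scale2: "sesq C (c *s a) b = c * sesq C a b"
  by (simp add: sesq_def sum_distrib_left algebra_simps)
lemma sesq_scale3: "sesq C a (c *s b) = cnj c * sesq C a b"
  by (simp add: sesq_def sum_distrib_left algebra_simps)
lemma sesq_sum2: "finite A \<Longrightarrow> sesq C (\<Sum>i\<in>A. f i) b = (\<Sum>i\<in>A. sesq C (f i) b)"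
  by (induction A rule: finite_induct) (simp_all add: sesq_add2)
lemma sesq_sum3: "finite A \<Longrightarrow> sesq C a (\<Sum>i\<in>A. f i) = (\<Sum>i\<in>A. sesq C a (f i))"
  by (induction A rule: finite_induct) (simp_all add: sesq_add3)


lemma sesq_has_derivative:
  assumes "(C has_derivative C') (at x)" "(A has_derivative A') (at x)" "(B has_derivative B') (at x)"
  shows "((\<lambda>z. sesq (C z) (A z) (B z)) has_derivative
     (\<lambda>h. sesq (C' h) (A x) (B x) + sesq (C x) (A' h) (B x) + sesq (C x) (A x) (B' h))) (at x)"
proof -
  have c: "((\<lambda>z. C z $ j $ k) has_derivative (\<lambda>h. C' h $ j $ k)) (at x)" for j k
    using hd_nth[OF hd_nth[OF assms(1)]] .
  have a: "((\<lambda>z. A z $ j) has_derivative (\<lambda>h. A' h $ j)) (at x)" for j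
    using hd_nth[OF assms(2)] .
  have b: "((\<lambda>z. cnj (B z $ k)) has_derivative (\<lambda>h. cnj (B' h $ k))) (at x)" for k
    using has_derivative_cnj[OF hd_nth[OF assms(3)]] .
  have "((\<lambda>z. \<Sum>j\<in>UNIV. \<Sum>k\<in>UNIV. C z $ j $ k * A z $ j * cnj (B z $ k)) has_derivative
     (\<lambda>h. \<Sum>j\<in>UNIV. \<Sum>k\<in>UNIV. C x $ j $ k * A x $ j * cnj (B' h $ k) +
          (C x $ j $ k * A' h $ j + C' h $ j $ k * A x $ j) * cnj (B x $ k))) (at x)"
    by (intro has_derivative_sum has_derivative_mult c a b)
  then show ?thesis
    by (simp add: sesq_def sum.distrib ring_distribs add_ac mult_ac)
qed

lemma sesq_bound:
  "norm (sesq C a b) \<le> (\<Sum>j\<in>UNIV. \<Sum>k\<in>UNIV. norm (C$j$k)) * norm a * norm b"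
proof -
  have "norm (sesq C a b) \<le> (\<Sum>j\<in>UNIV. \<Sum>k\<in>UNIV. norm (C$j$k * a$j * cnj (b$k)))"
    unfolding sesq_def by (rule order_trans[OF norm_sum sum_mono]) (rule norm_sum)
  also have "\<dots> \<le> (\<Sum>j\<in>UNIV. \<Sum>k\<in>UNIV. norm (C$j$k) * norm a * norm b)"
  proof (intro sum_mono)
    fix j k
    have "norm (C$j$k * a$j * cnj (b$k)) = norm (C$j$k) * norm (a$j) * norm (b$k)"
      by (simp add: norm_mult)
    also have "\<dots> \<le> norm (C$j$k) * norm a * norm b"
    proof -
      have "norm (a$j) \<le> norm a" "norm (b$k) \<le> norm b" by (rule Finite_Cartesian_Product.norm_nth_le)+
      then show ?thesis by (intro mult_mono) auto
    qed
    finally show "norm (C$j$k * a$j * cnj (b$k)) \<le> norm (C$j$k) * norm a * norm b" .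
  qed
  also have "\<dots> = (\<Sum>j\<in>UNIV. \<Sum>k\<in>UNIV. norm (C$j$k)) * norm a * norm b"
    by (simp add: sum_distrib_right)
  finally show ?thesis .
qed


lemma rho_frontier_zero:
  fixes \<rho> :: "'a::real_normed_vector \<Rightarrow> real"
  assumes "open V" "open \<Omega>" "z0 \<in> V" "z0 \<in> frontier \<Omega>" "\<forall>w\<in>V. w \<in> \<Omega> \<longleftrightarrow> \<rho> w < 0"
    "continuous_on V \<rho>"
  shows "\<rho> z0 = 0"
proof -
  have "z0 \<notin> \<Omega>" using assms(2,4) by (simp add: frontier_def interior_open)
  hence ge: "\<rho> z0 \<ge> 0" using assms(3,5) by auto
  show ?thesis
  proof (rule ccontr)
    assume "\<rho> z0 \<noteq> 0" hence pos: "\<rho> z0 > 0" using ge by auto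
    have "continuous (at z0) \<rho>" using assms(1,3,6) continuous_on_eq_continuous_at by blast
    then obtain d where d: "d > 0" "\<forall>y. dist y z0 < d \<longrightarrow> dist (\<rho> y) (\<rho> z0) < \<rho> z0"
      using pos unfolding continuous_at_eps_delta by blast
    obtain r where r: "r > 0" "ball z0 r \<subseteq> V" using assms(1,3) open_contains_ball by blast
    have "z0 \<in> closure \<Omega>" using assms(4) by (simp add: frontier_def)
    then obtain y where y: "y \<in> \<Omega>" "dist y z0 < min d r"
      using d(1) r(1) unfolding closure_approachable by (metis min_less_iff_conj)
    have "y \<in> V" using y(2) r(2) by (auto simp: dist_commute)
    hence "\<rho> y < 0" using assms(5) y(1) by auto
    moreover have "dist (\<rho> y) (\<rho> z0) < \<rho> z0" using d(2) y(2) by auto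
    ultimately show False by (simp add: dist_real_def)
  qed
qed

lemma TANG:
  fixes \<rho> :: "'a::real_normed_vector \<Rightarrow> real" and f :: "'a \<Rightarrow> 'b::real_normed_vector"
  assumes V: "open V" "z0 \<in> V" and fr: "z0 \<in> frontier \<Omega>" and o\<Omega>: "open \<Omega>"
    and sgn: "\<forall>w\<in>V. w \<in> \<Omega> \<longleftrightarrow> \<rho> w < 0" and cont: "continuous_on V \<rho>"
    and dr: "(\<rho> has_derivative l) (at z0)" and lnu: "l \<nu> = 1" and lX: "l X = 0"
    and df: "(f has_derivative f') (at z0)"
    and small: "\<forall>\<epsilon>>0. \<exists>\<delta>>0. \<forall>w\<in>frontier \<Omega>. norm (w - z0) < \<delta> \<longrightarrow> norm (f w) \<le> \<epsilon> * norm (w - z0)"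
  shows "f' X = 0"
proof (rule ccontr)
  assume ne: "f' X \<noteq> 0"
  define c where "c = norm (f' X)"
  have c: "c > 0" using ne by (simp add: c_def)
  define K where "K = norm (f' \<nu>) + 1"
  have K: "K > 0" by (simp add: K_def add_nonneg_pos)
  define \<epsilon> where "\<epsilon> = c / (4*K)"
  have \<epsilon>: "\<epsilon> > 0" using c K by (simp add: \<epsilon>_def)
  have \<epsilon>K: "\<epsilon> * norm (f' \<nu>) \<le> c/4"
  proof -
    have "\<epsilon> * norm (f' \<nu>) \<le> \<epsilon> * K" using \<epsilon> by (intro mult_left_mono) (auto simp: K_def)
    also have "\<dots> = c/4" using K by (simp add: \<epsilon>_def)
    finally show ?thesis .
  qed
  define R where "R = norm X + \<epsilon> * norm \<nu>"
  have R: "R \<ge> 0" using \<epsilon> by (simp add: R_def)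
  define \<eta> where "\<eta> = c / (4*(R+1))"
  have \<eta>: "\<eta> > 0" using c R by (simp add: \<eta>_def)
  have \<eta>R: "2 * \<eta> * R \<le> c/2"
  proof -
    have "2 * \<eta> * R = c/2 * (R / (R+1))" using R by (simp add: \<eta>_def field_simps)
    also have "\<dots> \<le> c/2 * 1" using R c by (intro mult_left_mono) auto
    finally show ?thesis by simp
  qed
  define \<eta>3 where "\<eta>3 = \<epsilon> / (2*(R+1))"
  have \<eta>3: "\<eta>3 > 0" using \<epsilon> R by (simp add: \<eta>3_def)
  have \<eta>3R: "\<eta>3 * R \<le> \<epsilon>/2"
  proof -
    have "\<eta>3 * R = \<epsilon>/2 * (R / (R+1))" using R by (simp add: \<eta>3_def field_simps)
    also have "\<dots> \<le> \<epsilon>/2 * 1" using R \<epsilon> by (intro mult_left_mono) auto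
    finally show ?thesis by simp
  qed
  have z0: "\<rho> z0 = 0" using rho_frontier_zero[OF V(1) o\<Omega> V(2) fr sgn cont] .
  have f0: "f z0 = 0"
  proof -
    obtain \<delta> where "\<delta> > 0" "\<forall>w\<in>frontier \<Omega>. norm (w - z0) < \<delta> \<longrightarrow> norm (f w) \<le> 1 * norm (w - z0)"
      using small by (meson zero_less_one)
    then show ?thesis using fr by auto
  qed
  obtain d1 where d1: "d1 > 0" "\<And>y. norm (y - z0) < d1 \<Longrightarrow> norm (f y - f z0 - f' (y - z0)) \<le> \<eta> * norm (y - z0)"
    using df \<eta> unfolding has_derivative_at_alt by blast
  have lin: "bounded_linear f'" using df unfolding has_derivative_at_alt by blast
  obtain d2 where d2: "d2 > 0" "\<And>w. w \<in> frontier \<Omega> \<Longrightarrow> norm (w - z0) < d2 \<Longrightarrow> norm (f w) \<le> \<eta> * norm (w - z0)"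
    using small \<eta> by blast
  obtain d3 where d3: "d3 > 0" "\<And>y. norm (y - z0) < d3 \<Longrightarrow> norm (\<rho> y - \<rho> z0 - l (y - z0)) \<le> \<eta>3 * norm (y - z0)"
    using dr \<eta>3 unfolding has_derivative_at_alt by blast
  have linl: "bounded_linear l" using dr unfolding has_derivative_at_alt by blast
  obtain r where r: "r > 0" "ball z0 r \<subseteq> V" using V open_contains_ball by blast
  define m where "m = min (min d1 d2) (min d3 r)"
  have m: "m > 0" using d1 d2 d3 r by (simp add: m_def)
  define t where "t = m / (2*(R+1))"
  have t: "t > 0" using m R by (simp add: t_def)
  have tR: "t * R < m"
  proof -
    have "t * R \<le> t * (R+1)" using t by simp
    also have "\<dots> = m/2" using R by (simp add: t_def field_simps)
    finally show ?thesis using m by simp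
  qed
  have nrm: "norm (t *\<^sub>R X + s *\<^sub>R \<nu>) \<le> t * R" if "\<bar>s\<bar> \<le> \<epsilon> * t" for s
  proof -
    have "norm (t *\<^sub>R X + s *\<^sub>R \<nu>) \<le> t * norm X + \<bar>s\<bar> * norm \<nu>"
      using t norm_triangle_ineq[of "t *\<^sub>R X" "s *\<^sub>R \<nu>"] by simp
    also have "\<dots> \<le> t * norm X + (\<epsilon> * t) * norm \<nu>"
      using that by (intro add_left_mono mult_right_mono) auto
    finally show ?thesis by (simp add: R_def algebra_simps)
  qed
  have lval: "l (t *\<^sub>R X + s *\<^sub>R \<nu>) = s" for s
    using linear_add[OF bounded_linear.linear[OF linl]] linear_scale[OF bounded_linear.linear[OF linl]] lX lnu
    by simp
  have rhoval: "\<bar>\<rho> (z0 + (t *\<^sub>R X + s *\<^sub>R \<nu>)) - s\<bar> \<le> \<epsilon> * t / 2" if "\<bar>s\<bar> \<le> \<epsilon> * t" for s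
  proof -
    have n: "norm (t *\<^sub>R X + s *\<^sub>R \<nu>) \<le> t * R" using nrm[OF that] .
    have "norm (t *\<^sub>R X + s *\<^sub>R \<nu>) < d3" using n tR m_def by linarith
    then have "norm (\<rho> (z0 + (t *\<^sub>R X + s *\<^sub>R \<nu>)) - \<rho> z0 - l (t *\<^sub>R X + s *\<^sub>R \<nu>)) \<le> \<eta>3 * norm (t *\<^sub>R X + s *\<^sub>R \<nu>)"
      using d3(2)[of "z0 + (t *\<^sub>R X + s *\<^sub>R \<nu>)"] by simp
    also have "\<dots> \<le> \<eta>3 * (t * R)" using n \<eta>3 by (intro mult_left_mono) auto
    also have "\<dots> \<le> \<epsilon> * t / 2" using \<eta>3R t by (simp add: mult.commute mult.left_commute)
    finally show ?thesis using z0 lval by simp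
  qed
  have inV: "z0 + (t *\<^sub>R X + s *\<^sub>R \<nu>) \<in> V" if "\<bar>s\<bar> \<le> \<epsilon> * t" for s
  proof -
    have "norm (t *\<^sub>R X + s *\<^sub>R \<nu>) < r" using nrm[OF that] tR m_def by linarith
    then have "z0 + (t *\<^sub>R X + s *\<^sub>R \<nu>) \<in> ball z0 r"
      by (simp add: dist_norm) (metis add_uminus_conv_diff minus_add_distrib norm_minus_cancel)
    then show ?thesis using r(2) by blast
  qed
  define a where "a = z0 + (t *\<^sub>R X + (- (\<epsilon>*t)) *\<^sub>R \<nu>)"
  define b where "b = z0 + (t *\<^sub>R X + (\<epsilon>*t) *\<^sub>R \<nu>)"
  have ea: "\<bar>- (\<epsilon>*t)\<bar> \<le> \<epsilon> * t" and eb: "\<bar>\<epsilon>*t\<bar> \<le> \<epsilon> * t" using \<epsilon> t by auto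
  have et: "\<epsilon> * t > 0" using \<epsilon> t by simp
  have "\<rho> a < 0" using rhoval[OF ea] et unfolding a_def abs_le_iff by linarith
  hence aO: "a \<in> \<Omega>" using sgn inV[OF ea] by (simp add: a_def)
  have "\<rho> b > 0" using rhoval[OF eb] et unfolding b_def abs_le_iff by linarith
  hence bO: "b \<notin> \<Omega>" using sgn inV[OF eb] by (auto simp: b_def)
  have "closed_segment a b \<inter> frontier \<Omega> \<noteq> {}"
    by (rule connected_Int_frontier[OF connected_segment]) (use aO bO in auto)
  then obtain w where w: "w \<in> closed_segment a b" "w \<in> frontier \<Omega>" by blast
  then obtain u where u: "0 \<le> u" "u \<le> 1" "w = (1 - u) *\<^sub>R a + u *\<^sub>R b"
    unfolding closed_segment_def by blast
  define s where "s = (2*u - 1) * (\<epsilon> * t)"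
  have s: "\<bar>s\<bar> \<le> \<epsilon> * t"
  proof -
    have "\<bar>2*u - 1\<bar> \<le> 1" using u by auto
    then have "\<bar>2*u - 1\<bar> * (\<epsilon> * t) \<le> 1 * (\<epsilon> * t)" using \<epsilon> t by (intro mult_right_mono) auto
    moreover have "\<bar>\<epsilon> * t\<bar> = \<epsilon> * t" using et by simp
    ultimately show ?thesis by (simp only: s_def abs_mult)
  qed
  have wz: "w - z0 = t *\<^sub>R X + s *\<^sub>R \<nu>"
    unfolding u(3) a_def b_def s_def by (simp add: algebra_simps scaleR_add_right flip: scaleR_add_left)
  have nw: "norm (w - z0) \<le> t * R" using nrm[OF s] wz by simp
  have nw1: "norm (w - z0) < d1" "norm (w - z0) < d2" using nw tR m_def by linarith+
  have e1: "norm (f w - f' (w - z0)) \<le> \<eta> * norm (w - z0)" using d1(2)[OF nw1(1)] f0 by simp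
  have e2: "norm (f w) \<le> \<eta> * norm (w - z0)" using d2(2)[OF w(2) nw1(2)] .
  have fw: "f' (w - z0) = t *\<^sub>R f' X + s *\<^sub>R f' \<nu>"
    unfolding wz using linear_add[OF bounded_linear.linear[OF lin]] linear_scale[OF bounded_linear.linear[OF lin]]
    by simp
  have "t * c = norm (t *\<^sub>R f' X)" using t by (simp add: c_def)
  also have "\<dots> = norm (f' (w - z0) - s *\<^sub>R f' \<nu>)" by (simp add: fw)
  also have "\<dots> \<le> norm (f' (w - z0)) + \<bar>s\<bar> * norm (f' \<nu>)"
    using norm_triangle_ineq4[of "f' (w - z0)" "s *\<^sub>R f' \<nu>"] by simp
  also have "\<dots> \<le> (norm (f w - f' (w - z0)) + norm (f w)) + (\<epsilon> * t) * norm (f' \<nu>)"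
  proof (intro add_mono)
    show "norm (f' (w - z0)) \<le> norm (f w - f' (w - z0)) + norm (f w)"
      using norm_triangle_ineq4[of "f w" "f w - f' (w - z0)"] by (simp add: add.commute)
    show "\<bar>s\<bar> * norm (f' \<nu>) \<le> \<epsilon> * t * norm (f' \<nu>)" using s by (intro mult_right_mono) auto
  qed
  also have "\<dots> \<le> (\<eta> * (t * R) + \<eta> * (t * R)) + t * (c/4)"
  proof (intro add_mono)
    show "norm (f w - f' (w - z0)) \<le> \<eta> * (t * R)" using e1 nw \<eta> by (meson mult_left_mono less_imp_le order_trans)
    show "norm (f w) \<le> \<eta> * (t * R)" using e2 nw \<eta> by (meson mult_left_mono less_imp_le order_trans)
    show "\<epsilon> * t * norm (f' \<nu>) \<le> t * (c/4)" using \<epsilon>K t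
      by (metis mult.commute mult.left_commute mult_left_mono less_imp_le)
  qed
  also have "\<dots> = t * (2 * \<eta> * R + c/4)" by (simp add: algebra_simps)
  also have "\<dots> \<le> t * (c/2 + c/4)" using \<eta>R t by (intro mult_left_mono) (auto simp: mult.commute)
  finally have "t * c \<le> t * (3/4 * c)" by simp
  then have "c \<le> 3/4 * c" using t by (simp add: mult_le_cancel_left)
  then show False using c by simp
qed


lemma bl_axis: "bounded_linear (axis j :: 'a::euclidean_space \<Rightarrow> 'a^'n::finite)"
proof -
  have "linear (axis j :: 'a \<Rightarrow> 'a^'n)"
    by (rule linearI) (simp_all add: axis_def vec_eq_iff)
  then show ?thesis by (simp add: linear_conv_bounded_linear)
qed

lemma vec_as_sum: "(\<chi> j. f j) = (\<Sum>j\<in>UNIV. axis j (f j) :: 'a::comm_monoid_add^'n::finite)"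
  by (simp add: vec_eq_iff sum_component axis_def)

lemma Ck_vec:
  fixes f :: "'n::finite \<Rightarrow> 'a::real_normed_vector \<Rightarrow> 'b::euclidean_space"
  assumes "open S" "\<And>j. Ck k S (f j)"
  shows "Ck k S (\<lambda>x. \<chi> j. f j x)"
proof -
  have "Ck k S (\<lambda>x. \<Sum>j\<in>UNIV. axis j (f j x))"
    by (intro Ck_sum[OF assms(1)] Ck_linear[OF assms(1) bl_axis] assms(2)) simp
  then show ?thesis by (simp add: vec_as_sum)
qed

lemma Ck_cmult: "open S \<Longrightarrow> Ck k S f \<Longrightarrow> Ck k S (\<lambda>x. (c::complex) * f x)"
  using Ck_mult[OF _ Ck_const] by blast

definition rv :: "(complex^'n::finite \<Rightarrow> real) \<Rightarrow> complex^'n \<Rightarrow> complex^'n" where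
  "rv \<rho> z = (\<chi> j. dz j (cplx \<rho>) z)"
definition Cm :: "(complex^'n::finite \<Rightarrow> real) \<Rightarrow> complex^'n \<Rightarrow> complex^'n^'n" where
  "Cm \<rho> z = (\<chi> j k. levi_coef \<rho> z j k)"
definition tn :: "(complex^'n::finite \<Rightarrow> real) \<Rightarrow> complex^'n \<Rightarrow> complex^'n \<Rightarrow> complex" where
  "tn \<rho> z a = (\<Sum>j\<in>UNIV. a$j * rv \<rho> z $ j)"

lemma levi_sesq: "levi \<rho> z a b = sesq (Cm \<rho> z) a b"
  by (simp add: levi_def sesq_def Cm_def)

lemma T10_tn: "T10 \<rho> z = {a. tn \<rho> z a = 0}"
  by (simp add: T10_def tn_def rv_def)

lemma Dir_cplx:
  assumes "\<rho> differentiable (at z)"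
  shows "Dir (cplx \<rho>) z v = complex_of_real (Dir \<rho> z v)"
proof -
  have "(\<rho> has_derivative Dir \<rho> z) (at z)" using assms by (simp add: Dir_eq frechet_derivative_works[symmetric])
  then have "(cplx \<rho> has_derivative (\<lambda>h. complex_of_real (Dir \<rho> z h))) (at z)"
    unfolding cplx_def by (rule bounded_linear.has_derivative[OF bounded_linear_of_real])
  then show ?thesis by (simp add: Dir_has)
qed

definition rr :: "(complex^'n::finite \<Rightarrow> real) \<Rightarrow> 'n \<Rightarrow> complex^'n \<Rightarrow> complex" where
  "rr \<rho> j z = (complex_of_real (Dir \<rho> z (axis j 1)) - \<i> * complex_of_real (Dir \<rho> z (axis j \<i>))) / 2"
definition rb :: "(complex^'n::finite \<Rightarrow> real) \<Rightarrow> 'n \<Rightarrow> complex^'n \<Rightarrow> complex" where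
  "rb \<rho> j z = (complex_of_real (Dir \<rho> z (axis j 1)) + \<i> * complex_of_real (Dir \<rho> z (axis j \<i>))) / 2"

lemma dz_eq: "\<rho> differentiable (at z) \<Longrightarrow> dz j (cplx \<rho>) z = rr \<rho> j z"
  by (simp add: dz_def rr_def Dir_cplx)
lemma dzbar_eq: "\<rho> differentiable (at z) \<Longrightarrow> dzbar j (cplx \<rho>) z = rb \<rho> j z"
  by (simp add: dzbar_def rb_def Dir_cplx)
lemma rb_cnj: "rb \<rho> j z = cnj (rr \<rho> j z)"
  by (simp add: rb_def rr_def complex_cnj_diff complex_cnj_add complex_cnj_mult)

lemma Ck_rr:
  assumes "open V" "Ck (Suc k) V \<rho>"
  shows "Ck k V (rr \<rho> j)" "Ck k V (rb \<rho> j)"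
proof -
  have a: "Ck k V (\<lambda>z. complex_of_real (Dir \<rho> z v))" for v
    using Ck_of_real[OF assms(1) Ck_Suc_Dir[OF assms(2)]] .
  have "Ck k V (\<lambda>z. (1/2) * (complex_of_real (Dir \<rho> z (axis j 1)) + (- \<i>) * complex_of_real (Dir \<rho> z (axis j \<i>))))"
    by (intro Ck_cmult[OF assms(1)] Ck_add[OF assms(1)] a)
  then show "Ck k V (rr \<rho> j)" by (simp add: rr_def[abs_def] field_simps)
  have "Ck k V (\<lambda>z. (1/2) * (complex_of_real (Dir \<rho> z (axis j 1)) + \<i> * complex_of_real (Dir \<rho> z (axis j \<i>))))"
    by (intro Ck_cmult[OF assms(1)] Ck_add[OF assms(1)] a)
  then show "Ck k V (rb \<rho> j)" by (simp add: rb_def[abs_def] field_simps)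
qed

lemma Ck_rv:
  assumes "open V" "Ck (Suc k) V \<rho>"
  shows "Ck k V (rv \<rho>)"
proof -
  have "Ck k V (\<lambda>z. \<chi> j. rr \<rho> j z)"
    by (rule Ck_vec[OF assms(1)]) (rule Ck_rr[OF assms])
  moreover have "\<And>z. z \<in> V \<Longrightarrow> rv \<rho> z = (\<chi> j. rr \<rho> j z)"
    using assms Ck_le[of 1 "Suc k"] by (auto simp: rv_def dz_eq vec_eq_iff)
  ultimately show ?thesis using Ck_cong[OF assms(1), of "rv \<rho>" "\<lambda>z. \<chi> j. rr \<rho> j z"] by simp
qed

lemma Ck_Cm:
  assumes "open V" "Ck (Suc (Suc k)) V \<rho>"
  shows "Ck k V (Cm \<rho>)"
proof -
  have rb: "Ck (Suc k) V (rb \<rho> j)" for j using Ck_rr(2)[OF assms] .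
  have eqd: "Dir (\<lambda>z. dzbar k' (cplx \<rho>) z) z = Dir (rb \<rho> k') z" if "z \<in> V" for z k'
  proof (rule Dir_cong[OF assms(1) that])
    fix y assume "y \<in> V"
    then show "dzbar k' (cplx \<rho>) y = rb \<rho> k' y"
      using dzbar_eq assms(2) by (metis Ck_Suc_diff)
  qed
  define G where "G j k' z = (Dir (rb \<rho> k') z (axis j 1) - \<i> * Dir (rb \<rho> k') z (axis j \<i>)) / 2" for j k' z
  have "Ck k V (\<lambda>z. (1/2) * (Dir (rb \<rho> k') z (axis j 1) + (- \<i>) * Dir (rb \<rho> k') z (axis j \<i>)))" for j k'
    by (intro Ck_cmult[OF assms(1)] Ck_add[OF assms(1)] Ck_Suc_Dir[OF rb])
  then have g: "Ck k V (G j k')" for j k' by (simp add: G_def[abs_def] field_simps)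
  have "Ck k V (\<lambda>z. \<chi> j. \<chi> k'. G j k' z)"
    by (intro Ck_vec[OF assms(1)] g)
  moreover have "Cm \<rho> z = (\<chi> j. \<chi> k'. G j k' z)" if "z \<in> V" for z
    using eqd[OF that] by (simp add: Cm_def levi_coef_def dz_def G_def vec_eq_iff)
  ultimately show ?thesis using Ck_cong[OF assms(1), of "Cm \<rho>"] by simp
qed


lemma scaleR_if0: "r *\<^sub>R (if b then x else 0) = (if b then r *\<^sub>R x else (0::'a::real_vector))"
  by simp

lemma vec_decomp: "w = (\<Sum>j\<in>UNIV. Re (w$j) *\<^sub>R axis j (1::complex) + Im (w$j) *\<^sub>R axis j \<i>)"
proof -
  have "(\<Sum>j\<in>UNIV. Re (w$j) *\<^sub>R axis j (1::complex) + Im (w$j) *\<^sub>R axis j \<i>) $ i = w $ i" for i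
  proof -
    have "(\<Sum>j\<in>UNIV. Re (w$j) *\<^sub>R axis j (1::complex) + Im (w$j) *\<^sub>R axis j \<i>) $ i
        = (\<Sum>j\<in>UNIV. if i = j then Re (w$j) *\<^sub>R (1::complex) + Im (w$j) *\<^sub>R \<i> else 0)"
      by (simp add: sum_component axis_def scaleR_if0 if_distrib eq_commute[of i] cong: if_cong)
    also have "\<dots> = Re (w$i) *\<^sub>R (1::complex) + Im (w$i) *\<^sub>R \<i>" by (simp add: if_distrib)
    also have "\<dots> = w $ i" by (simp add: complex_eq_iff)
    finally show ?thesis .
  qed
  then show ?thesis by (simp add: vec_eq_iff)
qed

lemma Dir_grad:
  assumes "\<rho> differentiable (at z)"
  shows "Dir \<rho> z w = inner w (grad \<rho> z)"
proof -
  have lin: "linear (Dir \<rho> z)" using assms linear_frechet_derivative by (simp add: Dir_eq)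
  have "Dir \<rho> z w = Dir \<rho> z (\<Sum>j\<in>UNIV. Re (w$j) *\<^sub>R axis j (1::complex) + Im (w$j) *\<^sub>R axis j \<i>)"
    using vec_decomp[of w] by simp
  also have "\<dots> = (\<Sum>j\<in>UNIV. Re (w$j) * Dir \<rho> z (axis j 1) + Im (w$j) * Dir \<rho> z (axis j \<i>))"
    using lin by (simp add: linear_sum linear_add linear_scale)
  also have "\<dots> = inner w (grad \<rho> z)"
    by (simp add: grad_def inner_vec_def inner_complex_def)
  finally show ?thesis .
qed

lemma tang_Tb:
  assumes "\<rho> differentiable (at z)" "Dir \<rho> z \<nu> = 1"
  shows "tang \<rho> z v \<in> Tb \<rho> z"
proof -
  have g: "inner (grad \<rho> z) (grad \<rho> z) \<noteq> 0"
  proof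
    assume "inner (grad \<rho> z) (grad \<rho> z) = 0"
    then have "grad \<rho> z = 0" by simp
    then have "Dir \<rho> z \<nu> = 0" using Dir_grad[OF assms(1)] by simp
    then show False using assms(2) by simp
  qed
  have "Dir \<rho> z (tang \<rho> z v) = inner (tang \<rho> z v) (grad \<rho> z)" using Dir_grad[OF assms(1)] .
  also have "\<dots> = 0" using g by (simp add: tang_def inner_diff_left)
  finally show ?thesis by (simp add: Tb_def)
qed

lemma dnorm_facts:
  assumes "\<rho> differentiable (at z)" "dnorm \<rho> z = 1"
  shows "rv \<rho> z \<noteq> 0" "\<exists>\<nu>. Dir \<rho> z \<nu> = 1"
proof -
  show rv: "rv \<rho> z \<noteq> 0"
  proof
    assume "rv \<rho> z = 0"
    then have "dz j (cplx \<rho>) z = 0" for j by (simp add: rv_def vec_eq_iff)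
    moreover have "dzbar j (cplx \<rho>) z = cnj (dz j (cplx \<rho>) z)" for j
      using assms(1) by (simp add: dz_eq dzbar_eq rb_cnj)
    ultimately have "dnorm \<rho> z = 0" by (simp add: dnorm_def)
    then show False using assms(2) by simp
  qed
  then obtain j where "rv \<rho> z $ j \<noteq> 0" by (auto simp: vec_eq_iff)
  then have "rr \<rho> j z \<noteq> 0" using assms(1) by (simp add: rv_def dz_eq)
  then obtain v where v: "Dir \<rho> z v \<noteq> 0" by (auto simp: rr_def)
  have lin: "linear (Dir \<rho> z)" using assms(1) linear_frechet_derivative by (simp add: Dir_eq)
  have "Dir \<rho> z ((1 / Dir \<rho> z v) *\<^sub>R v) = 1" using v lin by (simp add: linear_scale)
  then show "\<exists>\<nu>. Dir \<rho> z \<nu> = 1" by blast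
qed


lemma herm_sesq: "herm a b = sesq (mat 1) a b"
proof -
  have "(\<Sum>k\<in>UNIV. mat 1 $ j $ k * a$j * cnj (b$k)) = a$j * cnj (b$j)" for j
  proof -
    have "(\<Sum>k\<in>UNIV. mat 1 $ j $ k * a$j * cnj (b$k)) = (\<Sum>k\<in>UNIV. if j = k then a$j * cnj (b$k) else 0)"
      by (rule sum.cong) (auto simp: mat_def)
    then show ?thesis by simp
  qed
  then show ?thesis by (simp add: herm_def sesq_def)
qed

lemma cspan_vec: "cspan S = vec.span S"
  by (auto simp: cspan_def vec.span_explicit)

lemma mcnj: "z * cnj z = (complex_of_real (cmod z))^2"
  using complex_norm_square[of z] by simp

lemma herm_self: "herm a a = complex_of_real ((norm a)^2)"
proof -
  have "herm a a = (\<Sum>j\<in>UNIV. complex_of_real ((cmod (a$j))^2))"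
    by (simp add: herm_def mcnj)
  also have "\<dots> = complex_of_real (\<Sum>j\<in>UNIV. (cmod (a$j))^2)" by simp
  also have "(\<Sum>j\<in>UNIV. (cmod (a$j))^2) = (norm a)^2"
    by (simp add: norm_vec_def L2_set_def sum_nonneg)
  finally show ?thesis .
qed

lemma herm_bound: "cmod (herm a b) \<le> norm a * norm b"
proof -
  have "cmod (herm a b) \<le> (\<Sum>j\<in>UNIV. cmod (a$j) * cmod (b$j))"
    unfolding herm_def by (rule order_trans[OF norm_sum]) (simp add: norm_mult)
  also have "\<dots> \<le> L2_set (\<lambda>j. cmod (a$j)) UNIV * L2_set (\<lambda>j. cmod (b$j)) UNIV"
    using L2_set_mult_ineq[of "\<lambda>j. cmod (a$j)" "\<lambda>j. cmod (b$j)" UNIV] by simp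
  finally show ?thesis by (simp add: norm_vec_def)
qed

lemma herm_cnj: "herm b a = cnj (herm a b)"
  by (simp add: herm_def mult.commute)

definition ONF :: "nat \<Rightarrow> (nat \<Rightarrow> complex^'n::finite) \<Rightarrow> bool" where
  "ONF M e \<longleftrightarrow> (\<forall>i<M. \<forall>k<M. herm (e i) (e k) = (if i = k then 1 else 0))"

lemma ONF_inj: "ONF M e \<Longrightarrow> inj_on e {..<M}"
proof (rule inj_onI)
  fix i k assume o: "ONF M e" and ik: "i \<in> {..<M}" "k \<in> {..<M}" "e i = e k"
  show "i = k"
  proof (rule ccontr)
    assume "i \<noteq> k"
    then have "herm (e i) (e k) = 0" using o ik(1,2) by (simp add: ONF_def)
    moreover have "herm (e i) (e i) = 1" using o ik(1,2) by (simp add: ONF_def)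
    moreover have "herm (e i) (e k) = herm (e i) (e i)" using ik(3) by simp
    ultimately show False by simp
  qed
qed

lemma ONF_nz: "ONF M e \<Longrightarrow> i < M \<Longrightarrow> e i \<noteq> 0"
proof
  assume a: "ONF M e" "i < M" "e i = 0"
  from a(1,2) have "herm (e i) (e i) = 1" by (simp add: ONF_def)
  then show False using \<open>e i = 0\<close> by (simp add: herm_def)
qed

lemma span_expand:
  assumes o: "ONF M e" and I: "I \<subseteq> {..<M}" and v: "v \<in> vec.span (e ` I)"
  shows "v = (\<Sum>i\<in>I. herm v (e i) *s e i)"
    and "\<And>k. k < M \<Longrightarrow> k \<notin> I \<Longrightarrow> herm v (e k) = 0"
proof -
  have fI: "finite I" using I finite_subset by blast
  have inj: "inj_on e I" using ONF_inj[OF o] I inj_on_subset by blast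
  obtain u where u: "v = (\<Sum>x\<in>e ` I. u x *s x)"
    using v vec.span_finite[of "e ` I"] fI by auto
  have v2: "v = (\<Sum>i\<in>I. u (e i) *s e i)" using u sum.reindex[OF inj] by (simp add: comp_def)
  have hk: "herm v (e k) = (\<Sum>i\<in>I. u (e i) * herm (e i) (e k))" for k
    unfolding v2 herm_sesq by (simp add: sesq_sum2[OF fI] sesq_scale2)
  have c: "herm v (e k) = u (e k)" if "k \<in> I" for k
  proof -
    have "herm v (e k) = (\<Sum>i\<in>I. if i = k then u (e i) else 0)"
      unfolding hk using o I that by (intro sum.cong) (auto simp: ONF_def herm_sesq[symmetric] subset_iff)
    also have "\<dots> = u (e k)" using fI that by simp
    finally show ?thesis .
  qed
  show "v = (\<Sum>i\<in>I. herm v (e i) *s e i)" using v2 c by simp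
  show "\<And>k. k < M \<Longrightarrow> k \<notin> I \<Longrightarrow> herm v (e k) = 0"
  proof -
    fix k assume "k < M" "k \<notin> I"
    then show "herm v (e k) = 0"
      unfolding hk using o I by (intro sum.neutral) (auto simp: ONF_def herm_sesq[symmetric] subset_iff)
  qed
qed

lemma span_parseval:
  assumes o: "ONF M e" and I: "I \<subseteq> {..<M}" and v: "v \<in> vec.span (e ` I)"
  shows "(norm v)^2 = (\<Sum>i\<in>I. (cmod (herm v (e i)))^2)"
proof -
  have fI: "finite I" using I finite_subset by blast
  have "herm v v = herm v (\<Sum>i\<in>I. herm v (e i) *s e i)" using span_expand(1)[OF assms] by simp
  also have "\<dots> = (\<Sum>i\<in>I. cnj (herm v (e i)) * herm v (e i))"
    by (simp add: herm_sesq sesq_sum3[OF fI] sesq_scale3)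
  also have "\<dots> = (\<Sum>i\<in>I. complex_of_real ((cmod (herm v (e i)))^2))"
    by (simp add: mcnj mult.commute)
  finally have h: "herm v v = (\<Sum>i\<in>I. complex_of_real ((cmod (herm v (e i)))^2))" .
  have "complex_of_real ((norm v)^2) = complex_of_real (\<Sum>i\<in>I. (cmod (herm v (e i)))^2)"
    unfolding of_real_sum using h herm_self[of v] by simp
  then show ?thesis using of_real_eq_iff by blast
qed

lemma sesq_expand:
  assumes o: "ONF M e" and I: "I \<subseteq> {..<M}" and J: "J \<subseteq> {..<M}"
    and a: "a \<in> vec.span (e ` I)" and b: "b \<in> vec.span (e ` J)"
  shows "sesq C a b = (\<Sum>i\<in>I. \<Sum>k\<in>J. herm a (e i) * cnj (herm b (e k)) * sesq C (e i) (e k))"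
proof -
  have fI: "finite I" "finite J" using I J finite_subset by blast+
  have "sesq C a b = sesq C (\<Sum>i\<in>I. herm a (e i) *s e i) (\<Sum>k\<in>J. herm b (e k) *s e k)"
    using span_expand(1)[OF o I a] span_expand(1)[OF o J b] by simp
  also have "\<dots> = (\<Sum>i\<in>I. \<Sum>k\<in>J. herm a (e i) * cnj (herm b (e k)) * sesq C (e i) (e k))"
    by (simp add: sesq_sum2[OF fI(1)] sesq_sum3[OF fI(2)] sesq_scale2 sesq_scale3 sum_distrib_left mult_ac)
       (subst sum.swap, simp)
  finally show ?thesis .
qed


definition EBz :: "(complex^'n::finite \<Rightarrow> real) \<Rightarrow> complex^'n \<Rightarrow> (nat \<Rightarrow> real) \<Rightarrow> (nat \<Rightarrow> complex^'n) \<Rightarrow> bool" where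
  "EBz \<rho> z mu e \<longleftrightarrow> (\<forall>i < CARD('n) - 1. e i \<in> T10 \<rho> z) \<and>
        T10 \<rho> z \<subseteq> cspan (e ` {..<CARD('n) - 1}) \<and> ONF (CARD('n) - 1) e \<and>
        (\<forall>i < CARD('n) - 1. \<forall>k < CARD('n) - 1.
            levi \<rho> z (e i) (e k) = (if i = k then complex_of_real (mu i) else 0))"

lemma levi_eigenvalues_EB:
  "levi_eigenvalues \<rho> z mu \<Longrightarrow> \<exists>e. EBz \<rho> z mu e"
  unfolding levi_eigenvalues_def EBz_def ONF_def by (elim conjE exE) (intro exI conjI, assumption+)

lemma levi_eigenvalues_sorted:
  fixes \<rho> :: "complex^'n::finite \<Rightarrow> real"
  shows "levi_eigenvalues \<rho> z mu \<Longrightarrow> i \<le> j \<Longrightarrow> j < CARD('n::finite) - 1 \<Longrightarrow> mu i \<le> mu j"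
  unfolding levi_eigenvalues_def by (elim conjE) (erule allE, erule allE, erule impE, assumption, erule impE, assumption, assumption)

lemma T10_subspace: "vec.subspace (T10 \<rho> z)"
  unfolding vec.subspace_def T10_tn tn_def
  by (simp add: sum.distrib ring_distribs mult.assoc flip: sum_distrib_left)

lemma EB_T10_span:
  fixes \<rho> :: "complex^'n::finite \<Rightarrow> real"
  assumes "EBz \<rho> z mu e"
  shows "T10 \<rho> z = vec.span (e ` {..<CARD('n::finite) - 1})"
proof
  show "T10 \<rho> z \<subseteq> vec.span (e ` {..<CARD('n) - 1})" using assms by (simp add: EBz_def cspan_vec)
  show "vec.span (e ` {..<CARD('n) - 1}) \<subseteq> T10 \<rho> z"
    using assms T10_subspace vec.span_minimal[of "e ` {..<CARD('n) - 1}" "T10 \<rho> z"]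
    by (auto simp: EBz_def)
qed

lemma EB_span_sub:
  fixes \<rho> :: "complex^'n::finite \<Rightarrow> real"
  assumes "EBz \<rho> z mu e" "I \<subseteq> {..<CARD('n::finite) - 1}"
  shows "vec.span (e ` I) \<subseteq> T10 \<rho> z"
  using EB_T10_span[OF assms(1)] vec.span_mono[of "e ` I" "e ` {..<CARD('n) - 1}"] assms(2) by auto

lemma levi_exp:
  fixes \<rho> :: "complex^'n::finite \<Rightarrow> real"
  assumes eb: "EBz \<rho> z mu e" and a: "a \<in> T10 \<rho> z" and b: "b \<in> T10 \<rho> z"
  shows "levi \<rho> z a b = (\<Sum>i<CARD('n::finite) - 1. herm a (e i) * cnj (herm b (e i)) * complex_of_real (mu i))"
proof -
  let ?M = "CARD('n) - 1"
  have o: "ONF ?M e" using eb by (simp add: EBz_def)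
  have sp: "a \<in> vec.span (e ` {..<?M})" "b \<in> vec.span (e ` {..<?M})" using EB_T10_span[OF eb] a b by auto
  have "levi \<rho> z a b = (\<Sum>i<?M. \<Sum>k<?M. herm a (e i) * cnj (herm b (e k)) * sesq (Cm \<rho> z) (e i) (e k))"
    unfolding levi_sesq by (rule sesq_expand[OF o _ _ sp]) auto
  also have "\<dots> = (\<Sum>i<?M. \<Sum>k<?M. if k = i then herm a (e i) * cnj (herm b (e i)) * complex_of_real (mu i) else 0)"
    using eb by (intro sum.cong refl) (auto simp: EBz_def levi_sesq[symmetric])
  also have "\<dots> = (\<Sum>i<?M. herm a (e i) * cnj (herm b (e i)) * complex_of_real (mu i))"
    by simp
  finally show ?thesis .
qed

lemma levi_herm:
  assumes "levi_eigenvalues \<rho> z mu" "a \<in> T10 \<rho> z" "b \<in> T10 \<rho> z"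
  shows "levi \<rho> z a b = cnj (levi \<rho> z b a)"
proof -
  obtain e where eb: "EBz \<rho> z mu e" using levi_eigenvalues_EB[OF assms(1)] by blast
  show ?thesis unfolding levi_exp[OF eb assms(2,3)] levi_exp[OF eb assms(3,2)]
    by (simp add: mult_ac)
qed

lemma ONF_norm: "ONF M e \<Longrightarrow> i < M \<Longrightarrow> norm (e i) = 1"
proof -
  assume o: "ONF M e" "i < M"
  then have "herm (e i) (e i) = 1" by (simp add: ONF_def)
  then have "complex_of_real ((norm (e i))^2) = 1" using herm_self by metis
  then have "(norm (e i))^2 = 1" using of_real_eq_1_iff by blast
  then show ?thesis using norm_ge_zero[of "e i"] by (simp add: power2_eq_1_iff)
qed

lemma eigvec_coef:
  fixes \<rho> :: "complex^'n::finite \<Rightarrow> real"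
  assumes eb: "EBz \<rho> z mu e" and ev: "levi_eigvec \<rho> z lam a" and l: "l < CARD('n::finite) - 1"
    and nz: "herm a (e l) \<noteq> 0"
  shows "mu l = lam"
proof -
  let ?M = "CARD('n) - 1"
  have o: "ONF ?M e" using eb by (simp add: EBz_def)
  have a: "a \<in> T10 \<rho> z" using ev by (simp add: levi_eigvec_def)
  have el: "e l \<in> T10 \<rho> z" using eb l by (simp add: EBz_def)
  have "levi \<rho> z a (e l) = complex_of_real lam * herm a (e l)"
    using ev el by (simp add: levi_eigvec_def)
  moreover have "levi \<rho> z a (e l) = herm a (e l) * complex_of_real (mu l)"
  proof -
    have "levi \<rho> z a (e l) = (\<Sum>i<?M. herm a (e i) * cnj (herm (e l) (e i)) * complex_of_real (mu i))"
      by (rule levi_exp[OF eb a el])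
    also have "\<dots> = (\<Sum>i<?M. if i = l then herm a (e i) * complex_of_real (mu i) else 0)"
      using o l by (intro sum.cong refl) (auto simp: ONF_def)
    also have "\<dots> = herm a (e l) * complex_of_real (mu l)" using l by simp
    finally show ?thesis .
  qed
  ultimately have "herm a (e l) * (complex_of_real (mu l) - complex_of_real lam) = 0"
    by (simp add: algebra_simps)
  then show ?thesis using nz by simp
qed

lemma Ev_span:
  fixes \<rho> :: "complex^'n::finite \<Rightarrow> real"
  assumes eb: "EBz \<rho> z mu e"
    and gap: "\<forall>j < CARD('n::finite) - 1. \<forall>k < CARD('n) - 1. mp k \<noteq> 0 \<longrightarrow> mp j = 0 \<longrightarrow> mu k \<noteq> mu j"
  shows "cspan {a. \<exists>j < CARD('n) - 1. mp j = 0 \<and> levi_eigvec \<rho> z (mu j) a}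
           \<subseteq> vec.span (e ` {k. k < CARD('n) - 1 \<and> mp k = 0})"
proof -
  let ?M = "CARD('n) - 1"
  let ?J = "{k. k < ?M \<and> mp k = 0}"
  have o: "ONF ?M e" using eb by (simp add: EBz_def)
  have "a \<in> vec.span (e ` ?J)" if h: "\<exists>j < ?M. mp j = 0 \<and> levi_eigvec \<rho> z (mu j) a" for a
  proof -
    obtain j where j: "j < ?M" "mp j = 0" "levi_eigvec \<rho> z (mu j) a" using h by blast
    have aT: "a \<in> T10 \<rho> z" using j(3) by (simp add: levi_eigvec_def)
    have sp: "a \<in> vec.span (e ` {..<?M})" using EB_T10_span[OF eb] aT by auto
    have ex: "a = (\<Sum>i\<in>{..<?M}. herm a (e i) *s e i)" using span_expand(1)[OF o _ sp] by simp
    have z: "herm a (e i) = 0" if "i < ?M" "i \<notin> ?J" for i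
    proof (rule ccontr)
      assume "herm a (e i) \<noteq> 0"
      then have "mu i = mu j" using eigvec_coef[OF eb j(3) that(1)] by simp
      moreover have "mp i \<noteq> 0" using that by simp
      ultimately show False using gap j(1,2) that(1) by blast
    qed
    have "a = (\<Sum>i\<in>?J. herm a (e i) *s e i)"
    proof -
      have "(\<Sum>i\<in>{..<?M}. herm a (e i) *s e i) = (\<Sum>i\<in>?J. herm a (e i) *s e i)"
        by (rule sum.mono_neutral_right) (auto simp: z)
      then show ?thesis using ex by simp
    qed
    moreover have "(\<Sum>i\<in>?J. herm a (e i) *s e i) \<in> vec.span (e ` ?J)"
      by (intro vec.span_sum vec.span_scale vec.span_base) auto
    ultimately show ?thesis by simp
  qed
  then have "{a. \<exists>j < ?M. mp j = 0 \<and> levi_eigvec \<rho> z (mu j) a} \<subseteq> vec.span (e ` ?J)" by blast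
  then show ?thesis unfolding cspan_vec by (rule vec.span_minimal[OF _ vec.subspace_span])
qed

lemma levi_bound_J:
  fixes \<rho> :: "complex^'n::finite \<Rightarrow> real"
  assumes eb: "EBz \<rho> z mu e" and J: "J \<subseteq> {..<CARD('n::finite) - 1}"
    and D: "D \<in> vec.span (e ` J)" and B: "B \<in> T10 \<rho> z"
  shows "cmod (levi \<rho> z D B) \<le> (\<Sum>k\<in>J. \<bar>mu k\<bar>) * norm D * norm B"
proof -
  let ?M = "CARD('n) - 1"
  have o: "ONF ?M e" using eb by (simp add: EBz_def)
  have DT: "D \<in> T10 \<rho> z" using EB_span_sub[OF eb J] D by auto
  have z: "herm D (e i) = 0" if "i < ?M" "i \<notin> J" for i using span_expand(2)[OF o J D] that by blast
  have "levi \<rho> z D B = (\<Sum>i<?M. herm D (e i) * cnj (herm B (e i)) * complex_of_real (mu i))"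
    by (rule levi_exp[OF eb DT B])
  also have "\<dots> = (\<Sum>i\<in>J. herm D (e i) * cnj (herm B (e i)) * complex_of_real (mu i))"
    by (rule sum.mono_neutral_right) (use J z in auto)
  finally have eq: "levi \<rho> z D B = (\<Sum>i\<in>J. herm D (e i) * cnj (herm B (e i)) * complex_of_real (mu i))" .
  have "cmod (levi \<rho> z D B) \<le> (\<Sum>i\<in>J. cmod (herm D (e i) * cnj (herm B (e i)) * complex_of_real (mu i)))"
    unfolding eq by (rule norm_sum)
  also have "\<dots> \<le> (\<Sum>i\<in>J. \<bar>mu i\<bar> * norm D * norm B)"
  proof (rule sum_mono)
    fix i assume i: "i \<in> J"
    then have ne: "norm (e i) = 1" using ONF_norm[OF o] J by auto
    have "cmod (herm D (e i)) \<le> norm D" using herm_bound[of D "e i"] ne by simp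
    moreover have "cmod (herm B (e i)) \<le> norm B" using herm_bound[of B "e i"] ne by simp
    ultimately have "cmod (herm D (e i)) * cmod (herm B (e i)) \<le> norm D * norm B"
      by (intro mult_mono) auto
    then have "\<bar>mu i\<bar> * (cmod (herm D (e i)) * cmod (herm B (e i))) \<le> \<bar>mu i\<bar> * (norm D * norm B)"
      by (intro mult_left_mono) auto
    then show "cmod (herm D (e i) * cnj (herm B (e i)) * complex_of_real (mu i)) \<le> \<bar>mu i\<bar> * norm D * norm B"
      by (simp add: norm_mult mult_ac)
  qed
  also have "\<dots> = (\<Sum>k\<in>J. \<bar>mu k\<bar>) * norm D * norm B" by (simp add: sum_distrib_right)
  finally show ?thesis .
qed


lemma norm_smult_vec: "norm (c *s (x::complex^'n::finite)) = cmod c * norm x"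
  by (simp add: norm_vec_def L2_set_right_distrib norm_mult)

lemma tn_add: "tn \<rho> z (x + y) = tn \<rho> z x + tn \<rho> z y"
  by (simp add: tn_def sum.distrib ring_distribs)
lemma tn_smult: "tn \<rho> z (c *s x) = c * tn \<rho> z x"
  by (simp add: tn_def sum_distrib_left mult.assoc)
lemma tn_diff: "tn \<rho> z (x - y) = tn \<rho> z x - tn \<rho> z y"
  by (simp add: tn_def sum_subtractf ring_distribs)

definition nn :: "(complex^'n::finite \<Rightarrow> real) \<Rightarrow> complex^'n \<Rightarrow> complex" where
  "nn \<rho> z = herm (rv \<rho> z) (rv \<rho> z)"
definition nv :: "(complex^'n::finite \<Rightarrow> real) \<Rightarrow> complex^'n \<Rightarrow> complex^'n" where
  "nv \<rho> z = (\<chi> j. cnj (rv \<rho> z $ j))"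
definition PP :: "(complex^'n::finite \<Rightarrow> real) \<Rightarrow> complex^'n \<Rightarrow> complex^'n \<Rightarrow> complex^'n \<Rightarrow> complex^'n" where
  "PP \<rho> p z u = (1 / nn \<rho> p) *s (nn \<rho> z *s u - tn \<rho> z u *s nv \<rho> z)"

lemma tn_nv: "tn \<rho> z (nv \<rho> z) = nn \<rho> z"
  by (simp add: tn_def nv_def nn_def herm_def mult.commute)

lemma nn_nz: "rv \<rho> z \<noteq> 0 \<Longrightarrow> nn \<rho> z \<noteq> 0"
  using herm_self[of "rv \<rho> z"] by (simp add: nn_def)

lemma PP_T10: "tn \<rho> z (PP \<rho> p z u) = 0"
  by (simp add: PP_def tn_smult tn_diff tn_nv)

lemma PP_self: "nn \<rho> p \<noteq> 0 \<Longrightarrow> tn \<rho> p u = 0 \<Longrightarrow> PP \<rho> p p u = u"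
  by (simp add: PP_def vec_eq_iff)

lemma PP_linear: "Vector_Spaces.linear (*s) (*s) (PP \<rho> p z)"
  unfolding Vector_Spaces.linear_iff
  by (simp add: vec.vector_space_axioms PP_def tn_add tn_smult vec_eq_iff algebra_simps)

definition E1 :: "(complex^'n::finite \<Rightarrow> real) \<Rightarrow> complex^'n \<Rightarrow> complex^'n \<Rightarrow> real" where
  "E1 \<rho> p z = (cmod (nn \<rho> z - nn \<rho> p) + (\<Sum>j\<in>UNIV. cmod (rv \<rho> z $ j - rv \<rho> p $ j)) * norm (nv \<rho> z)) / cmod (nn \<rho> p)"

lemma E1_nonneg: "E1 \<rho> p z \<ge> 0"
  by (simp add: E1_def sum_nonneg)

lemma PP_err:
  assumes "nn \<rho> p \<noteq> 0" "tn \<rho> p u = 0"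
  shows "norm (PP \<rho> p z u - u) \<le> E1 \<rho> p z * norm u"
proof -
  have eq: "PP \<rho> p z u - u = (1 / nn \<rho> p) *s ((nn \<rho> z - nn \<rho> p) *s u - tn \<rho> z u *s nv \<rho> z)"
    using assms(1) by (simp add: PP_def vec_eq_iff field_simps)
  have tz: "cmod (tn \<rho> z u) \<le> norm u * (\<Sum>j\<in>UNIV. cmod (rv \<rho> z $ j - rv \<rho> p $ j))"
  proof -
    have "tn \<rho> z u = tn \<rho> z u - tn \<rho> p u" using assms(2) by simp
    also have "\<dots> = (\<Sum>j\<in>UNIV. u$j * (rv \<rho> z $ j - rv \<rho> p $ j))"
      by (simp add: tn_def sum_subtractf ring_distribs)
    finally have "cmod (tn \<rho> z u) \<le> (\<Sum>j\<in>UNIV. cmod (u$j) * cmod (rv \<rho> z $ j - rv \<rho> p $ j))"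
      using norm_sum by (metis (no_types, lifting) norm_mult sum.cong)
    also have "\<dots> \<le> (\<Sum>j\<in>UNIV. norm u * cmod (rv \<rho> z $ j - rv \<rho> p $ j))"
      by (intro sum_mono mult_right_mono Finite_Cartesian_Product.norm_nth_le) auto
    finally show ?thesis by (simp add: sum_distrib_left)
  qed
  have "norm (PP \<rho> p z u - u) = norm ((nn \<rho> z - nn \<rho> p) *s u - tn \<rho> z u *s nv \<rho> z) / cmod (nn \<rho> p)"
    unfolding eq norm_smult_vec by (simp add: norm_divide)
  also have "\<dots> \<le> (cmod (nn \<rho> z - nn \<rho> p) * norm u + cmod (tn \<rho> z u) * norm (nv \<rho> z)) / cmod (nn \<rho> p)"
  proof (intro divide_right_mono order_trans[OF norm_triangle_ineq4] add_mono)
    show "norm ((nn \<rho> z - nn \<rho> p) *s u) \<le> cmod (nn \<rho> z - nn \<rho> p) * norm u"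
      by (simp only: norm_smult_vec order_refl)
    show "norm (tn \<rho> z u *s nv \<rho> z) \<le> cmod (tn \<rho> z u) * norm (nv \<rho> z)"
      by (simp only: norm_smult_vec order_refl)
  qed simp
  also have "\<dots> \<le> (cmod (nn \<rho> z - nn \<rho> p) * norm u + (norm u * (\<Sum>j\<in>UNIV. cmod (rv \<rho> z $ j - rv \<rho> p $ j))) * norm (nv \<rho> z)) / cmod (nn \<rho> p)"
    by (intro divide_right_mono add_left_mono mult_right_mono tz) auto
  also have "\<dots> = E1 \<rho> p z * norm u" by (simp add: E1_def field_simps)
  finally show ?thesis .
qed

definition KK :: "complex^'n::finite^'n \<Rightarrow> real" where
  "KK C = (\<Sum>j\<in>UNIV. \<Sum>k\<in>UNIV. cmod (C$j$k))"

lemma KK_nonneg: "KK C \<ge> 0" by (simp add: KK_def sum_nonneg)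

lemma sesq_bound': "cmod (sesq C a b) \<le> KK C * norm a * norm b"
  using sesq_bound by (simp add: KK_def)

lemma sesq_diff1: "sesq (C - C') a b = sesq C a b - sesq C' a b"
  by (simp add: sesq_def sum_subtractf ring_distribs)

definition E2 :: "(complex^'n::finite \<Rightarrow> real) \<Rightarrow> complex^'n \<Rightarrow> complex^'n \<Rightarrow> real" where
  "E2 \<rho> p z = KK (Cm \<rho> z - Cm \<rho> p) + KK (Cm \<rho> z) * E1 \<rho> p z * (2 + E1 \<rho> p z)"

lemma levi_err:
  assumes "nn \<rho> p \<noteq> 0" "tn \<rho> p u = 0"
  shows "cmod (levi \<rho> z (PP \<rho> p z u) (PP \<rho> p z u) - levi \<rho> p u u) \<le> E2 \<rho> p z * (norm u)^2"
proof -
  let ?v = "PP \<rho> p z u" and ?e = "E1 \<rho> p z" and ?Cz = "Cm \<rho> z" and ?Cp = "Cm \<rho> p"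
  have d: "norm (?v - u) \<le> ?e * norm u" using PP_err[OF assms] .
  have v: "norm ?v \<le> (1 + ?e) * norm u"
    using norm_triangle_ineq[of "?v - u" u] d by (simp add: algebra_simps)
  have eq: "levi \<rho> z ?v ?v - levi \<rho> p u u = sesq (?Cz - ?Cp) u u + sesq ?Cz (?v - u) ?v + sesq ?Cz u (?v - u)"
    by (simp add: levi_sesq sesq_diff1 sesq_diff2 sesq_diff3)
  have "cmod (levi \<rho> z ?v ?v - levi \<rho> p u u) \<le> cmod (sesq (?Cz - ?Cp) u u) + cmod (sesq ?Cz (?v - u) ?v) + cmod (sesq ?Cz u (?v - u))"
    unfolding eq by (rule order_trans[OF norm_triangle_ineq add_right_mono[OF norm_triangle_ineq]])
  also have "\<dots> \<le> KK (?Cz - ?Cp) * norm u * norm u + KK ?Cz * (?e * norm u) * ((1 + ?e) * norm u) + KK ?Cz * norm u * (?e * norm u)"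
  proof (intro add_mono)
    show "cmod (sesq (?Cz - ?Cp) u u) \<le> KK (?Cz - ?Cp) * norm u * norm u" by (rule sesq_bound')
    show "cmod (sesq ?Cz (?v - u) ?v) \<le> KK ?Cz * (?e * norm u) * ((1 + ?e) * norm u)"
      by (rule order_trans[OF sesq_bound']) (intro mult_mono d v mult_nonneg_nonneg KK_nonneg; simp add: E1_nonneg)
    show "cmod (sesq ?Cz u (?v - u)) \<le> KK ?Cz * norm u * (?e * norm u)"
      by (rule order_trans[OF sesq_bound']) (intro mult_mono d mult_nonneg_nonneg KK_nonneg; simp)
  qed
  also have "\<dots> = E2 \<rho> p z * (norm u)^2" by (simp add: E2_def power2_eq_square algebra_simps)
  finally show ?thesis .
qed


lemma ONF_indep:
  assumes o: "ONF M e" and I: "I \<subseteq> {..<M}"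
  shows "vec.independent (e ` I)"
proof -
  have fI: "finite I" using I finite_subset by blast
  have inj: "inj_on e I" using ONF_inj[OF o] I inj_on_subset by blast
  show ?thesis unfolding vec.independent_explicit
  proof (intro conjI allI impI ballI)
    show "finite (e ` I)" using fI by simp
  next
    fix c v assume s: "(\<Sum>v\<in>e ` I. c v *s v) = 0" and v: "v \<in> e ` I"
    then obtain k where k: "k \<in> I" "v = e k" by blast
    have s2: "(\<Sum>i\<in>I. c (e i) *s e i) = 0" using s by (simp add: sum.reindex[OF inj])
    have "herm (\<Sum>i\<in>I. c (e i) *s e i) (e k) = (\<Sum>i\<in>I. c (e i) * herm (e i) (e k))"
      unfolding herm_sesq by (simp add: sesq_sum2[OF fI] sesq_scale2)
    also have "\<dots> = (\<Sum>i\<in>I. if i = k then c (e i) else 0)"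
      using o I k(1) by (intro sum.cong refl) (auto simp: ONF_def subset_iff)
    also have "\<dots> = c (e k)" using fI k(1) by simp
    finally show "c v = 0" using s2 k(2) by (simp add: herm_def)
  qed
qed

lemma CF_intersect:
  fixes \<rho> :: "complex^'n::finite \<Rightarrow> real"
  assumes ebp: "EBz \<rho> p mp ep" and ebz: "EBz \<rho> z mz ez"
    and I1: "I1 \<subseteq> {..<CARD('n) - 1}" and I2: "I2 \<subseteq> {..<CARD('n) - 1}"
    and card: "card I1 + card I2 > CARD('n) - 1"
    and inj: "\<And>u. u \<in> vec.span (ep ` I1) \<Longrightarrow> PP \<rho> p z u = 0 \<Longrightarrow> u = 0"
  shows "\<exists>u \<in> vec.span (ep ` I1). u \<noteq> 0 \<and> PP \<rho> p z u \<in> vec.span (ez ` I2)"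
proof -
  let ?M = "CARD('n) - 1" and ?P = "PP \<rho> p z"
  have lin: "Vector_Spaces.linear (*s) (*s) ?P" by (rule PP_linear)
  have op: "ONF ?M ep" using ebp by (simp add: EBz_def)
  have oz: "ONF ?M ez" using ebz by (simp add: EBz_def)
  have fI: "finite I1" "finite I2" using I1 I2 finite_subset by blast+
  have c1: "card (ep ` I1) = card I1" using card_image ONF_inj[OF op] I1 inj_on_subset by blast
  have c2: "card (ez ` I2) = card I2" using card_image ONF_inj[OF oz] I2 inj_on_subset by blast
  have injP: "inj_on ?P (vec.span (ep ` I1))"
  proof (rule inj_onI)
    fix u v assume uv: "u \<in> vec.span (ep ` I1)" "v \<in> vec.span (ep ` I1)" "?P u = ?P v"
    have "?P (u - v) = 0" using uv(3) vec.linear_diff[OF lin] by simp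
    moreover have "u - v \<in> vec.span (ep ` I1)" using uv(1,2) vec.span_diff by blast
    ultimately have "u - v = 0" using inj by blast
    then show "u = v" by simp
  qed
  define Q where "Q = ?P ` vec.span (ep ` I1)"
  define Q2 where "Q2 = vec.span (ez ` I2)"
  have Qs: "Q = vec.span (?P ` (ep ` I1))" unfolding Q_def using vec.linear_span_image[OF lin] by simp
  have dQ: "vec.dim Q = card I1"
  proof -
    have "vec.dim Q = vec.dim (?P ` (ep ` I1))" unfolding Qs by simp
    also have "\<dots> = vec.dim (ep ` I1)" by (rule vec.dim_image_eq[OF lin injP])
    also have "\<dots> = card I1" using vec.dim_eq_card_independent[OF ONF_indep[OF op I1]] c1 by simp
    finally show ?thesis .
  qed
  have dQ2: "vec.dim Q2 = card I2"
    unfolding Q2_def using vec.dim_span_eq_card_independent[OF ONF_indep[OF oz I2]] c2 by simp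
  have sQ: "vec.subspace Q" "vec.subspace Q2" unfolding Qs Q2_def by (simp_all add: vec.subspace_span)
  have QT: "Q \<subseteq> T10 \<rho> z" unfolding Q_def using PP_T10 by (auto simp: T10_tn)
  have Q2T: "Q2 \<subseteq> T10 \<rho> z" unfolding Q2_def using EB_span_sub[OF ebz I2] .
  have sumT: "{x + y |x y. x \<in> Q \<and> y \<in> Q2} \<subseteq> vec.span (ez ` {..<?M})"
  proof -
    have "{x + y |x y. x \<in> Q \<and> y \<in> Q2} \<subseteq> T10 \<rho> z"
      using QT Q2T vec.subspace_add[OF T10_subspace] by blast
    then show ?thesis using EB_T10_span[OF ebz] by simp
  qed
  have "vec.dim {x + y |x y. x \<in> Q \<and> y \<in> Q2} \<le> card (ez ` {..<?M})"
    by (rule vec.dim_le_card[OF sumT]) simp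
  also have "\<dots> \<le> ?M" using card_image_le[of "{..<?M}" ez] by simp
  finally have dsum: "vec.dim {x + y |x y. x \<in> Q \<and> y \<in> Q2} \<le> ?M" .
  have "vec.dim (Q \<inter> Q2) > 0"
    using vec.dim_sums_Int[OF sQ] dQ dQ2 dsum card by linarith
  then have "\<not> (Q \<inter> Q2 \<subseteq> {0})" using vec.dim_eq_0 by (metis less_irrefl)
  then obtain w where w: "w \<in> Q" "w \<in> Q2" "w \<noteq> 0" by blast
  then obtain u where u: "u \<in> vec.span (ep ` I1)" "w = ?P u" unfolding Q_def by blast
  have "u \<noteq> 0" using u w(3) vec.linear_0[OF lin] by auto
  then show ?thesis using u w unfolding Q2_def by blast
qed

lemma QF:
  fixes \<rho> :: "complex^'n::finite \<Rightarrow> real"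
  assumes eb: "EBz \<rho> z mu e" and I: "I \<subseteq> {..<CARD('n) - 1}" and v: "v \<in> vec.span (e ` I)"
  shows "levi \<rho> z v v = complex_of_real (\<Sum>i\<in>I. (cmod (herm v (e i)))^2 * mu i)"
proof -
  let ?M = "CARD('n) - 1"
  have o: "ONF ?M e" using eb by (simp add: EBz_def)
  have vT: "v \<in> T10 \<rho> z" using EB_span_sub[OF eb I] v by auto
  have z: "herm v (e i) = 0" if "i < ?M" "i \<notin> I" for i using span_expand(2)[OF o I v] that by blast
  have "levi \<rho> z v v = (\<Sum>i<?M. herm v (e i) * cnj (herm v (e i)) * complex_of_real (mu i))"
    by (rule levi_exp[OF eb vT vT])
  also have "\<dots> = (\<Sum>i\<in>I. herm v (e i) * cnj (herm v (e i)) * complex_of_real (mu i))"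
    by (rule sum.mono_neutral_right) (use I z in auto)
  also have "\<dots> = complex_of_real (\<Sum>i\<in>I. (cmod (herm v (e i)))^2 * mu i)"
    by (simp add: mcnj)
  finally show ?thesis .
qed

lemma EIG_upper:
  fixes \<rho> :: "complex^'n::finite \<Rightarrow> real"
  assumes ebp: "EBz \<rho> p mp ep" and sp: "\<forall>i j. i \<le> j \<longrightarrow> j < CARD('n) - 1 \<longrightarrow> mp i \<le> mp j"
    and ebz: "EBz \<rho> z mz ez" and sz: "\<forall>i j. i \<le> j \<longrightarrow> j < CARD('n) - 1 \<longrightarrow> mz i \<le> mz j"
    and k: "k < CARD('n) - 1" "mp k = 0" and nn: "nn \<rho> p \<noteq> 0"
    and e1: "E1 \<rho> p z \<le> 1/2" and e2: "E2 \<rho> p z \<le> \<epsilon>/4" and eps: "\<epsilon> \<ge> 0"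
  shows "mz k \<le> \<epsilon>"
proof -
  let ?M = "CARD('n) - 1" and ?P = "PP \<rho> p z"
  let ?I1 = "{..k}" and ?I2 = "{k..<?M}"
  have I1: "?I1 \<subseteq> {..<?M}" using k by auto
  have I2: "?I2 \<subseteq> {..<?M}" by auto
  have card: "card ?I1 + card ?I2 > ?M" using k by simp
  have tu: "tn \<rho> p u = 0" if "u \<in> vec.span (ep ` ?I1)" for u
    using EB_span_sub[OF ebp I1] that by (auto simp: T10_tn)
  have err: "norm (?P u - u) \<le> norm u / 2" if "u \<in> vec.span (ep ` ?I1)" for u
  proof -
    have "norm (?P u - u) \<le> E1 \<rho> p z * norm u" using PP_err[OF nn tu[OF that]] .
    also have "\<dots> \<le> 1/2 * norm u" using e1 by (intro mult_right_mono) auto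
    finally show ?thesis by simp
  qed
  have inj: "u = 0" if "u \<in> vec.span (ep ` ?I1)" "?P u = 0" for u
    using err[OF that(1)] that(2) by simp
  obtain u where u: "u \<in> vec.span (ep ` ?I1)" "u \<noteq> 0" "?P u \<in> vec.span (ez ` ?I2)"
    using CF_intersect[OF ebp ebz I1 I2 card inj] by blast
  define v where "v = ?P u"
  have uv: "norm u \<le> 2 * norm v"
    using err[OF u(1)] norm_triangle_ineq4[of "v" "v - u"] unfolding v_def[symmetric]
    by (simp add: norm_minus_commute)
  have "norm u > 0" using u(2) by simp
  then have vpos: "norm v > 0" using uv by linarith
  have Lp: "Re (levi \<rho> p u u) \<le> 0"
  proof -
    have "Re (levi \<rho> p u u) = (\<Sum>i\<in>?I1. (cmod (herm u (ep i)))^2 * mp i)"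
      using QF[OF ebp I1 u(1)] by simp
    also have "\<dots> \<le> 0"
      using sp k by (intro sum_nonpos mult_nonneg_nonpos) (auto, metis)
    finally show ?thesis .
  qed
  have Lz: "mz k * (norm v)^2 \<le> Re (levi \<rho> z v v)"
  proof -
    have "mz k * (norm v)^2 = (\<Sum>i\<in>?I2. (cmod (herm v (ez i)))^2 * mz k)"
      using span_parseval[of ?M ez ?I2 v] ebz I2 u(3) v_def by (simp add: EBz_def sum_distrib_left mult.commute)
    also have "\<dots> \<le> (\<Sum>i\<in>?I2. (cmod (herm v (ez i)))^2 * mz i)"
      using sz by (intro sum_mono mult_left_mono) auto
    also have "\<dots> = Re (levi \<rho> z v v)" using QF[OF ebz I2] u(3) v_def by simp
    finally show ?thesis .
  qed
  have "Re (levi \<rho> z v v) - Re (levi \<rho> p u u) \<le> cmod (levi \<rho> z v v - levi \<rho> p u u)"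
    using abs_Re_le_cmod[of "levi \<rho> z v v - levi \<rho> p u u"] by simp
  also have "\<dots> \<le> E2 \<rho> p z * (norm u)^2" unfolding v_def by (rule levi_err[OF nn tu[OF u(1)]])
  also have "\<dots> \<le> \<epsilon>/4 * (norm u)^2" using e2 by (intro mult_right_mono) auto
  also have "\<dots> \<le> \<epsilon>/4 * (2 * norm v)^2" using uv eps by (intro mult_left_mono power_mono) auto
  finally have "mz k * (norm v)^2 \<le> \<epsilon> * (norm v)^2" using Lp Lz by (simp add: power_mult_distrib)
  then show ?thesis using vpos by simp
qed

lemma EIG_lower:
  fixes \<rho> :: "complex^'n::finite \<Rightarrow> real"
  assumes ebp: "EBz \<rho> p mp ep" and sp: "\<forall>i j. i \<le> j \<longrightarrow> j < CARD('n) - 1 \<longrightarrow> mp i \<le> mp j"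
    and ebz: "EBz \<rho> z mz ez" and sz: "\<forall>i j. i \<le> j \<longrightarrow> j < CARD('n) - 1 \<longrightarrow> mz i \<le> mz j"
    and k: "k < CARD('n) - 1" "mp k = 0" and nn: "nn \<rho> p \<noteq> 0"
    and e1: "E1 \<rho> p z \<le> 1/2" and e2: "E2 \<rho> p z \<le> \<epsilon>/4" and eps: "\<epsilon> \<ge> 0"
  shows "- \<epsilon> \<le> mz k"
proof -
  let ?M = "CARD('n) - 1" and ?P = "PP \<rho> p z"
  let ?I1 = "{k..<?M}" and ?I2 = "{..k}"
  have I1: "?I1 \<subseteq> {..<?M}" by auto
  have I2: "?I2 \<subseteq> {..<?M}" using k by auto
  have card: "card ?I1 + card ?I2 > ?M" using k by simp
  have tu: "tn \<rho> p u = 0" if "u \<in> vec.span (ep ` ?I1)" for u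
    using EB_span_sub[OF ebp I1] that by (auto simp: T10_tn)
  have err: "norm (?P u - u) \<le> norm u / 2" if "u \<in> vec.span (ep ` ?I1)" for u
  proof -
    have "norm (?P u - u) \<le> E1 \<rho> p z * norm u" using PP_err[OF nn tu[OF that]] .
    also have "\<dots> \<le> 1/2 * norm u" using e1 by (intro mult_right_mono) auto
    finally show ?thesis by simp
  qed
  have inj: "u = 0" if "u \<in> vec.span (ep ` ?I1)" "?P u = 0" for u
    using err[OF that(1)] that(2) by simp
  obtain u where u: "u \<in> vec.span (ep ` ?I1)" "u \<noteq> 0" "?P u \<in> vec.span (ez ` ?I2)"
    using CF_intersect[OF ebp ebz I1 I2 card inj] by blast
  define v where "v = ?P u"
  have uv: "norm u \<le> 2 * norm v"
    using err[OF u(1)] norm_triangle_ineq4[of "v" "v - u"] unfolding v_def[symmetric]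
    by (simp add: norm_minus_commute)
  have "norm u > 0" using u(2) by simp
  then have vpos: "norm v > 0" using uv by linarith
  have Lp: "Re (levi \<rho> p u u) \<ge> 0"
  proof -
    have "Re (levi \<rho> p u u) = (\<Sum>i\<in>?I1. (cmod (herm u (ep i)))^2 * mp i)"
      using QF[OF ebp I1 u(1)] by simp
    also have "\<dots> \<ge> 0"
      using sp k by (intro sum_nonneg mult_nonneg_nonneg) (auto, metis)
    finally show ?thesis .
  qed
  have Lz: "Re (levi \<rho> z v v) \<le> mz k * (norm v)^2"
  proof -
    have "Re (levi \<rho> z v v) = (\<Sum>i\<in>?I2. (cmod (herm v (ez i)))^2 * mz i)"
      using QF[OF ebz I2] u(3) v_def by simp
    also have "\<dots> \<le> (\<Sum>i\<in>?I2. (cmod (herm v (ez i)))^2 * mz k)"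
      using sz k by (intro sum_mono mult_left_mono) auto
    also have "\<dots> = mz k * (norm v)^2"
      using span_parseval[of ?M ez ?I2 v] ebz I2 u(3) v_def by (simp add: EBz_def sum_distrib_left mult.commute)
    finally show ?thesis .
  qed
  have "Re (levi \<rho> p u u) - Re (levi \<rho> z v v) \<le> cmod (levi \<rho> z v v - levi \<rho> p u u)"
    using abs_Re_le_cmod[of "levi \<rho> z v v - levi \<rho> p u u"] by simp
  also have "\<dots> \<le> E2 \<rho> p z * (norm u)^2" unfolding v_def by (rule levi_err[OF nn tu[OF u(1)]])
  also have "\<dots> \<le> \<epsilon>/4 * (norm u)^2" using e2 by (intro mult_right_mono) auto
  also have "\<dots> \<le> \<epsilon>/4 * (2 * norm v)^2" using uv eps by (intro mult_left_mono power_mono) auto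
  finally have "- \<epsilon> * (norm v)^2 \<le> mz k * (norm v)^2" using Lp Lz by (simp add: power_mult_distrib)
  moreover have "(norm v)^2 > 0" using vpos by simp
  ultimately show ?thesis using mult_right_le_imp_le[of "- \<epsilon>" "(norm v)^2" "mz k"] by simp
qed


lemma norm_nv: "norm (nv \<rho> z) = norm (rv \<rho> z)"
  by (simp add: norm_vec_def nv_def)

lemma KK_zero[simp]: "KK 0 = 0" by (simp add: KK_def)

lemma E1_cont:
  assumes "isCont (rv \<rho>) p"
  shows "isCont (E1 \<rho> p) p"
proof -
  have "isCont (\<lambda>z. (cmod ((\<Sum>j\<in>UNIV. rv \<rho> z $ j * cnj (rv \<rho> z $ j)) - nn \<rho> p)
      + (\<Sum>j\<in>UNIV. cmod (rv \<rho> z $ j - rv \<rho> p $ j)) * norm (rv \<rho> z)) * (1 / cmod (nn \<rho> p))) p"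
    by (intro continuous_intros assms)
  moreover have "E1 \<rho> p = (\<lambda>z. (cmod ((\<Sum>j\<in>UNIV. rv \<rho> z $ j * cnj (rv \<rho> z $ j)) - nn \<rho> p)
      + (\<Sum>j\<in>UNIV. cmod (rv \<rho> z $ j - rv \<rho> p $ j)) * norm (rv \<rho> z)) * (1 / cmod (nn \<rho> p)))"
    by (rule ext) (simp add: E1_def nn_def herm_def norm_nv)
  ultimately show ?thesis by simp
qed

lemma E2_cont:
  assumes "isCont (rv \<rho>) p" "isCont (Cm \<rho>) p"
  shows "isCont (E2 \<rho> p) p"
proof -
  have "isCont (\<lambda>z. (\<Sum>j\<in>UNIV. \<Sum>k\<in>UNIV. cmod (Cm \<rho> z $ j $ k - Cm \<rho> p $ j $ k))
        + (\<Sum>j\<in>UNIV. \<Sum>k\<in>UNIV. cmod (Cm \<rho> z $ j $ k)) * E1 \<rho> p z * (2 + E1 \<rho> p z)) p"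
    by (intro continuous_intros assms E1_cont)
  moreover have "E2 \<rho> p = (\<lambda>z. (\<Sum>j\<in>UNIV. \<Sum>k\<in>UNIV. cmod (Cm \<rho> z $ j $ k - Cm \<rho> p $ j $ k))
        + (\<Sum>j\<in>UNIV. \<Sum>k\<in>UNIV. cmod (Cm \<rho> z $ j $ k)) * E1 \<rho> p z * (2 + E1 \<rho> p z))"
    by (rule ext) (simp add: E2_def KK_def)
  ultimately show ?thesis by simp
qed

lemma E1_at: "E1 \<rho> p p = 0" by (simp add: E1_def)
lemma E2_at: "E2 \<rho> p p = 0" by (simp add: E2_def E1_at)

lemma small_near:
  assumes "isCont f p" "f p = (0::real)" "e > 0"
  shows "\<exists>d>0. \<forall>z. dist z p < d \<longrightarrow> f z \<le> e"
proof -
  obtain d where "d > 0" "\<forall>z. dist z p < d \<longrightarrow> dist (f z) (f p) < e"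
    using assms(1,3) unfolding continuous_at_eps_delta by blast
  note d = this
  have "f z \<le> e" if "dist z p < d" for z using d(2) that assms(2) by (force simp: dist_real_def)
  then show ?thesis using d(1) by blast
qed

lemma EIG_ev:
  fixes \<rho> :: "complex^'n::finite \<Rightarrow> real"
  assumes evs: "\<forall>z \<in> frontier \<Omega>. levi_eigenvalues \<rho> z (\<mu> z)" and p: "p \<in> frontier \<Omega>"
    and k: "k < CARD('n) - 1" "\<mu> p k = 0" and nn: "nn \<rho> p \<noteq> 0"
    and crv: "isCont (rv \<rho>) p" and cCm: "isCont (Cm \<rho>) p" and eps: "\<epsilon> > 0"
  shows "\<exists>d>0. \<forall>z\<in>frontier \<Omega>. dist z p < d \<longrightarrow> \<bar>\<mu> z k\<bar> \<le> \<epsilon>"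
proof -
  obtain d1 where d1: "d1 > 0" "\<forall>z. dist z p < d1 \<longrightarrow> E1 \<rho> p z \<le> 1/2"
    using small_near[OF E1_cont[OF crv] E1_at, of "1/2"] by auto
  obtain d2 where d2: "d2 > 0" "\<forall>z. dist z p < d2 \<longrightarrow> E2 \<rho> p z \<le> \<epsilon>/4"
    using small_near[OF E2_cont[OF crv cCm] E2_at, of "\<epsilon>/4"] eps by auto
  obtain ep where ebp: "EBz \<rho> p (\<mu> p) ep" using levi_eigenvalues_EB evs p by blast
  have sp: "\<forall>i j. i \<le> j \<longrightarrow> j < CARD('n) - 1 \<longrightarrow> \<mu> p i \<le> \<mu> p j"
    using levi_eigenvalues_sorted evs p by blast
  have "\<bar>\<mu> z k\<bar> \<le> \<epsilon>" if z: "z \<in> frontier \<Omega>" "dist z p < min d1 d2" for z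
  proof -
    obtain ez where ebz: "EBz \<rho> z (\<mu> z) ez" using levi_eigenvalues_EB evs z(1) by blast
    have sz: "\<forall>i j. i \<le> j \<longrightarrow> j < CARD('n) - 1 \<longrightarrow> \<mu> z i \<le> \<mu> z j"
      using levi_eigenvalues_sorted evs z(1) by blast
    have e1: "E1 \<rho> p z \<le> 1/2" and e2: "E2 \<rho> p z \<le> \<epsilon>/4" using d1 d2 z(2) by auto
    show ?thesis using EIG_upper[OF ebp sp ebz sz k nn e1 e2] EIG_lower[OF ebp sp ebz sz k nn e1 e2] eps
      by auto
  qed
  then show ?thesis using d1(1) d2(1) by (intro exI[of _ "min d1 d2"]) auto
qed

lemma PP_comp: "PP \<rho> p z u = (\<chi> i. (1 / nn \<rho> p) * ((\<Sum>j\<in>UNIV. rv \<rho> z $ j * cnj (rv \<rho> z $ j)) * u$i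
      - (\<Sum>j\<in>UNIV. u$j * rv \<rho> z $ j) * cnj (rv \<rho> z $ i)))"
  by (simp add: PP_def vec_eq_iff nn_def herm_def tn_def nv_def diff_divide_distrib)

lemma Ck_PP:
  fixes S :: "(complex^'n::finite) set"
  assumes "open S" "Ck k S (rv \<rho>)"
  shows "Ck k S (\<lambda>z. PP \<rho> p z u)"
proof -
  have c: "Ck k S (\<lambda>z. rv \<rho> z $ j)" for j
    using Ck_linear[OF assms(1) bounded_linear_vec_nth assms(2)] .
  have cc: "Ck k S (\<lambda>z. cnj (rv \<rho> z $ j))" for j using Ck_cnj[OF assms(1) c] .
  have n: "Ck k S (\<lambda>z. \<Sum>j\<in>UNIV. rv \<rho> z $ j * cnj (rv \<rho> z $ j))"
    by (intro Ck_sum[OF assms(1)] Ck_mult[OF assms(1)] c cc) simp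
  have t: "Ck k S (\<lambda>z. \<Sum>j\<in>UNIV. u$j * rv \<rho> z $ j)"
    by (intro Ck_sum[OF assms(1)] Ck_cmult[OF assms(1)] c) simp
  have "Ck k S (\<lambda>z. \<chi> i. (1 / nn \<rho> p) * ((\<Sum>j\<in>UNIV. rv \<rho> z $ j * cnj (rv \<rho> z $ j)) * u$i
      - (\<Sum>j\<in>UNIV. u$j * rv \<rho> z $ j) * cnj (rv \<rho> z $ i)))"
    by (intro Ck_vec[OF assms(1)] Ck_cmult[OF assms(1)] Ck_minus[OF assms(1)] Ck_mult[OF assms(1)] n t cc Ck_const)
  then show ?thesis by (simp add: PP_comp)
qed


definition GEO :: "(complex^'n::finite) set \<Rightarrow> (complex^'n \<Rightarrow> real) \<Rightarrow> (complex^'n) set \<Rightarrow> bool" where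
  "GEO \<Omega> \<rho> V \<longleftrightarrow> open \<Omega> \<and> open V \<and> frontier \<Omega> \<subseteq> V \<and> (\<forall>w\<in>V. w \<in> \<Omega> \<longleftrightarrow> \<rho> w < 0) \<and>
     continuous_on V \<rho> \<and> (\<forall>z\<in>frontier \<Omega>. \<rho> differentiable (at z) \<and> (\<exists>\<nu>. Dir \<rho> z \<nu> = 1))"

lemma TANGW:
  fixes f :: "complex^'n::finite \<Rightarrow> 'b::real_normed_vector"
  assumes geo: "GEO \<Omega> \<rho> V" and z0: "z0 \<in> frontier \<Omega>" and df: "(f has_derivative f') (at z0)"
    and X: "X \<in> Tb \<rho> z0"
    and small: "\<forall>\<epsilon>>0. \<exists>\<delta>>0. \<forall>w\<in>frontier \<Omega>. norm (w - z0) < \<delta> \<longrightarrow> norm (f w) \<le> \<epsilon> * norm (w - z0)"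
  shows "f' X = 0"
proof -
  have g: "open \<Omega>" "open V" "frontier \<Omega> \<subseteq> V" "\<forall>w\<in>V. w \<in> \<Omega> \<longleftrightarrow> \<rho> w < 0" "continuous_on V \<rho>"
    "\<rho> differentiable (at z0)" "\<exists>\<nu>. Dir \<rho> z0 \<nu> = 1"
    using geo z0 by (auto simp: GEO_def)
  obtain \<nu> where nu: "Dir \<rho> z0 \<nu> = 1" using g(7) by blast
  have dr: "(\<rho> has_derivative Dir \<rho> z0) (at z0)" using g(6) by (simp add: Dir_eq frechet_derivative_works[symmetric])
  have lX: "Dir \<rho> z0 X = 0" using X by (simp add: Tb_def)
  show ?thesis using TANG[OF g(2) _ z0 g(1) g(4) g(5) dr nu lX df small] g(3) z0 by blast
qed

lemma small_zero:
  assumes "open S" "z0 \<in> S" "\<And>w. w \<in> S \<Longrightarrow> w \<in> frontier \<Omega> \<Longrightarrow> f w = 0"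
  shows "\<forall>\<epsilon>>0. \<exists>\<delta>>0. \<forall>w\<in>frontier \<Omega>. norm (w - z0) < \<delta> \<longrightarrow> norm (f w) \<le> \<epsilon> * norm (w - z0)"
proof (intro allI impI)
  fix \<epsilon> :: real assume "\<epsilon> > 0"
  obtain r where r: "r > 0" "ball z0 r \<subseteq> S" using assms(1,2) open_contains_ball by blast
  have "norm (f w) \<le> \<epsilon> * norm (w - z0)" if "w \<in> frontier \<Omega>" "norm (w - z0) < r" for w
  proof -
    have "w \<in> S" using r(2) that(2) by (auto simp: dist_norm norm_minus_commute)
    then show ?thesis using assms(3) that(1) \<open>\<epsilon> > 0\<close> by simp
  qed
  then show "\<exists>\<delta>>0. \<forall>w\<in>frontier \<Omega>. norm (w - z0) < \<delta> \<longrightarrow> norm (f w) \<le> \<epsilon> * norm (w - z0)"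
    using r(1) by blast
qed

lemma TANG0:
  fixes f :: "complex^'n::finite \<Rightarrow> 'b::real_normed_vector"
  assumes geo: "GEO \<Omega> \<rho> V" and z0: "z0 \<in> frontier \<Omega>" and df: "(f has_derivative f') (at z0)"
    and X: "X \<in> Tb \<rho> z0" and S: "open S" "z0 \<in> S" and z: "\<And>w. w \<in> S \<Longrightarrow> w \<in> frontier \<Omega> \<Longrightarrow> f w = 0"
  shows "f' X = 0"
  by (rule TANGW[OF geo z0 df X small_zero[OF S z]])

lemma TANG0D:
  fixes f :: "complex^'n::finite \<Rightarrow> 'b::real_normed_vector"
  assumes geo: "GEO \<Omega> \<rho> V" and z0: "z0 \<in> frontier \<Omega>" and df: "f differentiable (at z0)"
    and X: "X \<in> Tb \<rho> z0" and S: "open S" "z0 \<in> S" and z: "\<And>w. w \<in> S \<Longrightarrow> w \<in> frontier \<Omega> \<Longrightarrow> f w = 0"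
  shows "Dir f z0 X = 0"
proof -
  have "(f has_derivative Dir f z0) (at z0)" using df by (simp add: Dir_eq frechet_derivative_works[symmetric])
  then show ?thesis by (rule TANG0[OF geo z0 _ X S z])
qed

lemma tn_deriv:
  assumes "(D has_derivative D') (at p)" "(rv \<rho> has_derivative R') (at p)"
  shows "((\<lambda>z. tn \<rho> z (D z)) has_derivative (\<lambda>h. tn \<rho> p (D' h) + (\<Sum>j\<in>UNIV. D p $ j * R' h $ j))) (at p)"
proof -
  have "((\<lambda>z. \<Sum>j\<in>UNIV. D z $ j * rv \<rho> z $ j) has_derivative
        (\<lambda>h. \<Sum>j\<in>UNIV. D p $ j * R' h $ j + D' h $ j * rv \<rho> p $ j)) (at p)"
    by (intro has_derivative_sum has_derivative_mult hd_nth assms)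
  then show ?thesis by (simp add: tn_def sum.distrib add.commute)
qed

lemma KEY:
  fixes \<rho> :: "complex^'n::finite \<Rightarrow> real"
  assumes geo: "GEO \<Omega> \<rho> V"
    and evs: "\<forall>z \<in> frontier \<Omega>. levi_eigenvalues \<rho> z (\<mu> z)" and p: "p \<in> frontier \<Omega>"
    and U: "open U" "p \<in> U" "U \<subseteq> V"
    and gap: "\<forall>z \<in> U \<inter> frontier \<Omega>. \<forall>j < CARD('n) - 1. \<forall>k < CARD('n) - 1.
           \<mu> p k \<noteq> 0 \<longrightarrow> \<mu> p j = 0 \<longrightarrow> \<mu> z k \<noteq> \<mu> z j"
    and nn: "nn \<rho> p \<noteq> 0" and rvC: "Ck 1 V (rv \<rho>)" and CmC: "Ck 1 V (Cm \<rho>)"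
    and D: "(D has_derivative D') (at p)" "D p = 0"
      "\<forall>z\<in>U \<inter> frontier \<Omega>. D z \<in> cspan {a. \<exists>j < CARD('n) - 1. \<mu> p j = 0 \<and> levi_eigvec \<rho> z (\<mu> z j) a}"
    and W: "W \<in> Tb \<rho> p"
  shows "D' W \<in> Kker \<rho> p"
proof -
  let ?M = "CARD('n) - 1"
  define J where "J = {k. k < ?M \<and> \<mu> p k = 0}"
  have fJ: "finite J" unfolding J_def by simp
  have oV: "open V" using geo by (simp add: GEO_def)
  have pV: "p \<in> V" using U by auto
  have rvd: "(rv \<rho> has_derivative Dir (rv \<rho>) p) (at p)" using Ck_Suc_D[OF rvC[unfolded One_nat_def] pV] .
  have Cmd: "(Cm \<rho> has_derivative Dir (Cm \<rho>) p) (at p)" using Ck_Suc_D[OF CmC[unfolded One_nat_def] pV] .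
  have crv: "isCont (rv \<rho>) p" using has_derivative_continuous[OF rvd] .
  have cCm: "isCont (Cm \<rho>) p" using has_derivative_continuous[OF Cmd] .
  have DJ: "D z \<in> vec.span (ez ` J)" if "z \<in> U" "z \<in> frontier \<Omega>" "EBz \<rho> z (\<mu> z) ez" for z ez
  proof -
    have "\<forall>j < ?M. \<forall>k < ?M. \<mu> p k \<noteq> 0 \<longrightarrow> \<mu> p j = 0 \<longrightarrow> \<mu> z k \<noteq> \<mu> z j" using gap that by blast
    from Ev_span[OF that(3) this] show ?thesis using D(3) that(1,2) unfolding J_def by blast
  qed
  have DT: "tn \<rho> z (D z) = 0" if zz: "z \<in> U" "z \<in> frontier \<Omega>" for z
  proof -
    obtain ez where ez: "EBz \<rho> z (\<mu> z) ez" using levi_eigenvalues_EB evs zz(2) by blast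
    have "J \<subseteq> {..<?M}" by (auto simp: J_def)
    then show ?thesis using EB_span_sub[OF ez] DJ[OF zz ez] by (auto simp: T10_tn)
  qed
  have s1: "tn \<rho> p (D' W) = 0"
  proof -
    have "(\<lambda>h. tn \<rho> p (D' h) + (\<Sum>j\<in>UNIV. D p $ j * Dir (rv \<rho>) p h $ j)) W = 0"
      by (rule TANG0[OF geo p tn_deriv[OF D(1) rvd] W U(1,2)]) (rule DT)
    then show ?thesis using D(2) by simp
  qed
  have s2: "levi \<rho> p (D' W) b = 0" if b: "b \<in> T10 \<rho> p" for b
  proof -
    have tb: "tn \<rho> p b = 0" using b by (simp add: T10_tn)
    define B where "B z = PP \<rho> p z b" for z
    have BC: "Ck 1 V B" unfolding B_def[abs_def] by (rule Ck_PP[OF oV rvC])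
    have Bd: "(B has_derivative Dir B p) (at p)" using Ck_Suc_D[OF BC[unfolded One_nat_def] pV] .
    have Bp: "B p = b" unfolding B_def using PP_self[OF nn tb] .
    have fd: "((\<lambda>z. sesq (Cm \<rho> z) (D z) (B z)) has_derivative (\<lambda>h. sesq (Cm \<rho> p) (D' h) b)) (at p)"
      using sesq_has_derivative[OF Cmd D(1) Bd] D(2) Bp by simp
    have small: "\<forall>\<epsilon>>0. \<exists>\<delta>>0. \<forall>w\<in>frontier \<Omega>. norm (w - p) < \<delta> \<longrightarrow> norm (sesq (Cm \<rho> w) (D w) (B w)) \<le> \<epsilon> * norm (w - p)"
    proof (intro allI impI)
      fix \<epsilon> :: real assume eps: "\<epsilon> > 0"
      obtain K where K: "K > 0" "\<And>x. norm (D' x) \<le> norm x * K"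
        using bounded_linear.pos_bounded[OF has_derivative_bounded_linear[OF D(1)]] by blast
      define CD where "CD = K + 1"
      define A where "A = (real (card J) + 1) * CD * (2 * norm b + 1)"
      have nb: "0 \<le> norm b" by simp
      have a1: "real (card J) + 1 > 0" "CD > 0" "2 * norm b + 1 > 0" using K nb by (simp, simp add: CD_def, linarith)
      have A: "A > 0" unfolding A_def using a1 by simp
      define e' where "e' = \<epsilon> / A"
      have e': "e' > 0" using eps A by (simp add: e'_def)
      have ev1: "eventually (\<lambda>w. w \<in> U) (nhds p)" by (rule eventually_nhds_in_open[OF U(1,2)])
      have ev2: "eventually (\<lambda>w. norm (D w) \<le> CD * norm (w - p)) (nhds p)"
      proof -
        obtain d where d: "d > 0" "\<And>y. norm (y - p) < d \<Longrightarrow> norm (D y - D p - D' (y - p)) \<le> 1 * norm (y - p)"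
          using D(1) unfolding has_derivative_at_alt by (meson zero_less_one)
        have "norm (D y) \<le> CD * norm (y - p)" if "dist y p < d" for y
        proof -
          have "norm (D y) \<le> norm (D y - D' (y - p)) + norm (D' (y - p))"
            using norm_triangle_ineq4[of "D y - D' (y - p)" "- D' (y - p)"] by (simp add: norm_triangle_sub)
          also have "\<dots> \<le> 1 * norm (y - p) + norm (y - p) * K"
            using d(2)[of y] that D(2) K(2)[of "y - p"] by (simp add: dist_norm)
          finally show ?thesis by (simp add: CD_def algebra_simps)
        qed
        then show ?thesis unfolding eventually_nhds_metric using d(1) by blast
      qed
      have ev3: "eventually (\<lambda>w. norm (B w) \<le> 2 * norm b) (nhds p)"
      proof -
        obtain d where d: "d > 0" "\<forall>z. dist z p < d \<longrightarrow> E1 \<rho> p z \<le> 1"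
          using small_near[OF E1_cont[OF crv] E1_at, of 1] by auto
        have "norm (B y) \<le> 2 * norm b" if "dist y p < d" for y
        proof -
          have "norm (B y - b) \<le> E1 \<rho> p y * norm b" unfolding B_def by (rule PP_err[OF nn tb])
          also have "\<dots> \<le> 1 * norm b" using d(2) that by (intro mult_right_mono) auto
          finally show ?thesis using norm_triangle_ineq[of "B y - b" b] by simp
        qed
        then show ?thesis unfolding eventually_nhds_metric using d(1) by blast
      qed
      have ev4: "eventually (\<lambda>w. w \<in> frontier \<Omega> \<longrightarrow> (\<forall>k\<in>J. \<bar>\<mu> w k\<bar> \<le> e')) (nhds p)"
      proof -
        have "\<forall>k\<in>J. eventually (\<lambda>w. w \<in> frontier \<Omega> \<longrightarrow> \<bar>\<mu> w k\<bar> \<le> e') (nhds p)"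
        proof
          fix k assume "k \<in> J"
          then have k: "k < ?M" "\<mu> p k = 0" by (auto simp: J_def)
          obtain d where "d > 0" "\<forall>z\<in>frontier \<Omega>. dist z p < d \<longrightarrow> \<bar>\<mu> z k\<bar> \<le> e'"
            using EIG_ev[OF evs p k nn crv cCm e'] by blast
          then show "eventually (\<lambda>w. w \<in> frontier \<Omega> \<longrightarrow> \<bar>\<mu> w k\<bar> \<le> e') (nhds p)"
            unfolding eventually_nhds_metric by blast
        qed
        from eventually_ball_finite[OF fJ this] show ?thesis by (rule eventually_mono) blast
      qed
      have "eventually (\<lambda>w. w \<in> frontier \<Omega> \<longrightarrow> norm (sesq (Cm \<rho> w) (D w) (B w)) \<le> \<epsilon> * norm (w - p)) (nhds p)"
        using ev1 ev2 ev3 ev4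
      proof eventually_elim
        case (elim w)
        show ?case
        proof
          assume wf: "w \<in> frontier \<Omega>"
          obtain ew where ew: "EBz \<rho> w (\<mu> w) ew" using levi_eigenvalues_EB evs wf by blast
          have Jsub: "J \<subseteq> {..<?M}" by (auto simp: J_def)
          have Bw: "B w \<in> T10 \<rho> w" unfolding B_def by (simp add: T10_tn PP_T10)
          have "norm (sesq (Cm \<rho> w) (D w) (B w)) \<le> (\<Sum>k\<in>J. \<bar>\<mu> w k\<bar>) * norm (D w) * norm (B w)"
            using levi_bound_J[OF ew Jsub DJ[OF elim(1) wf ew] Bw] by (simp add: levi_sesq)
          also have "\<dots> \<le> (real (card J) * e') * (CD * norm (w - p)) * (2 * norm b)"
          proof (intro mult_mono)
            show "(\<Sum>k\<in>J. \<bar>\<mu> w k\<bar>) \<le> real (card J) * e'"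
              using sum_bounded_above[of J "\<lambda>k. \<bar>\<mu> w k\<bar>" e'] elim(4) wf by simp
          qed (use elim e' K in \<open>auto simp: CD_def intro!: mult_nonneg_nonneg\<close>)
          also have "\<dots> = (\<epsilon> * norm (w - p)) * ((real (card J) * CD * (2 * norm b)) / A)"
            by (simp add: e'_def field_simps)
          also have "\<dots> \<le> (\<epsilon> * norm (w - p)) * 1"
          proof (intro mult_left_mono)
            have "real (card J) * CD * (2 * norm b) \<le> A"
              unfolding A_def using K by (intro mult_mono) (auto simp: CD_def)
            then show "real (card J) * CD * (2 * norm b) / A \<le> 1" using A by simp
          qed (use eps in auto)
          finally show "norm (sesq (Cm \<rho> w) (D w) (B w)) \<le> \<epsilon> * norm (w - p)" by simp
        qed
      qed
      then show "\<exists>\<delta>>0. \<forall>w\<in>frontier \<Omega>. norm (w - p) < \<delta> \<longrightarrow> norm (sesq (Cm \<rho> w) (D w) (B w)) \<le> \<epsilon> * norm (w - p)"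
        unfolding eventually_nhds_metric by (auto simp: dist_norm)
    qed
    have "sesq (Cm \<rho> p) (D' W) b = 0" using TANGW[OF geo p fd W small] .
    then show ?thesis by (simp add: levi_sesq)
  qed
  show ?thesis unfolding Kker_def using s1 s2 by (simp add: T10_tn)
qed


lemma Ck2_eq: "Ck 2 S f = Ck (Suc (Suc 0)) S f" by (simp add: numeral_2_eq_2)
lemma Ck2_D: "Ck 2 S f \<Longrightarrow> x \<in> S \<Longrightarrow> (f has_derivative Dir f x) (at x)"
  unfolding Ck2_eq by (rule Ck_Suc_D)
lemma Ck2_DD: "Ck 2 S f \<Longrightarrow> x \<in> S \<Longrightarrow> (\<lambda>z. Dir f z v) differentiable (at x)"
  unfolding Ck2_eq using Ck_Suc_Dir[of "Suc 0" S f v] by (simp add: Dir_eq)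
lemma Ck2_1: "Ck 2 S f \<Longrightarrow> Ck 1 S f"
  unfolding Ck2_eq using Ck_mono[of "Suc 0" S f] by simp
lemma Ck1_D: "Ck 1 S f \<Longrightarrow> x \<in> S \<Longrightarrow> (f has_derivative Dir f x) (at x)"
  using Ck_Suc_D[of 0 S f x] by simp
lemma Ck1_d: "Ck 1 S f \<Longrightarrow> x \<in> S \<Longrightarrow> f differentiable (at x)"
  by simp

lemma has_derivative_zero_unique:
  assumes "(f has_derivative f') (at x)" "\<And>z. f z = 0"
  shows "f' h = 0"
proof -
  have "f = (\<lambda>z. 0)" using assms(2) by (rule ext)
  then have "((\<lambda>z. 0) has_derivative f') (at x)" using assms(1) by simp
  moreover have "((\<lambda>z. 0) has_derivative (\<lambda>h. 0)) (at x)" by simp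
  ultimately have "f' = (\<lambda>h. 0)" using has_derivative_unique by blast
  then show ?thesis by simp
qed

lemma T3:
  fixes \<rho> :: "complex^'n::finite \<Rightarrow> real"
  assumes geo: "GEO \<Omega> \<rho> V"
    and evs: "\<forall>z \<in> frontier \<Omega>. levi_eigenvalues \<rho> z (\<mu> z)" and p: "p \<in> frontier \<Omega>"
    and U: "open U" "p \<in> U" "U \<subseteq> V"
    and nn: "nn \<rho> p \<noteq> 0" and rvC: "Ck 1 V (rv \<rho>)" and CmC: "Ck 1 V (Cm \<rho>)"
    and MC: "Ck 1 U M" and MT: "\<forall>z\<in>U \<inter> frontier \<Omega>. M z \<in> T10 \<rho> z"
    and MK: "M p \<in> KX \<Omega> \<rho> p W" and W: "W \<in> Tb \<rho> p" and a: "a \<in> Kker \<rho> p"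
  shows "sesq (Dir (Cm \<rho>) p W) a (M p) + sesq (Cm \<rho> p) (Dir (\<lambda>z. PP \<rho> p z a) p W) (M p)
          + sesq (Cm \<rho> p) a (Dir M p W) = 0"
proof -
  define S where "S z = PP \<rho> p z a" for z
  have pV: "p \<in> V" using U by auto
  have aT: "a \<in> T10 \<rho> p" using a by (simp add: Kker_def)
  have SC: "Ck 1 U S" unfolding S_def[abs_def] by (rule Ck_PP[OF U(1) Ck_subset[OF rvC U(3)]])
  have Sp: "S p = a" unfolding S_def using PP_self[OF nn] aT by (simp add: T10_tn)
  have ST: "S z \<in> T10 \<rho> z" for z unfolding S_def by (simp add: T10_tn PP_T10)
  have Kp: "M p \<in> Kker \<rho> p" and
    KXp: "\<forall>b\<in>Kker \<rho> p. \<forall>W' La Lb. open W' \<and> p \<in> W' \<and> Ck 1 W' La \<and> Ck 1 W' Lb \<and> La p = M p \<and> Lb p = b \<and>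
      (\<forall>z\<in>W' \<inter> frontier \<Omega>. La z \<in> T10 \<rho> z \<and> Lb z \<in> T10 \<rho> z) \<longrightarrow>
      Dir (\<lambda>z. levi \<rho> z (La z) (Lb z)) p W = 0"
    using MK unfolding KX_def by blast+
  have G0: "Dir (\<lambda>z. levi \<rho> z (M z) (S z)) p W = 0"
    using KXp a U(1,2) MC SC Sp MT ST by blast
  have Cd: "(Cm \<rho> has_derivative Dir (Cm \<rho>) p) (at p)" using Ck1_D[OF CmC pV] .
  have Md: "(M has_derivative Dir M p) (at p)" using Ck1_D[OF MC U(2)] .
  have Sd: "(S has_derivative Dir S p) (at p)" using Ck1_D[OF SC U(2)] .
  have Gd: "((\<lambda>z. levi \<rho> z (M z) (S z)) has_derivative
      (\<lambda>h. sesq (Dir (Cm \<rho>) p h) (M p) (S p) + sesq (Cm \<rho> p) (Dir M p h) (S p) + sesq (Cm \<rho> p) (M p) (Dir S p h))) (at p)"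
    unfolding levi_sesq by (rule sesq_has_derivative[OF Cd Md Sd])
  have G2d: "((\<lambda>z. levi \<rho> z (S z) (M z)) has_derivative
      (\<lambda>h. sesq (Dir (Cm \<rho>) p h) (S p) (M p) + sesq (Cm \<rho> p) (Dir S p h) (M p) + sesq (Cm \<rho> p) (S p) (Dir M p h))) (at p)"
    unfolding levi_sesq by (rule sesq_has_derivative[OF Cd Sd Md])
  define g' where "g' h = sesq (Dir (Cm \<rho>) p h) (M p) (S p) + sesq (Cm \<rho> p) (Dir M p h) (S p) + sesq (Cm \<rho> p) (M p) (Dir S p h)" for h
  define g2' where "g2' h = sesq (Dir (Cm \<rho>) p h) (S p) (M p) + sesq (Cm \<rho> p) (Dir S p h) (M p) + sesq (Cm \<rho> p) (S p) (Dir M p h)" for h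
  have g'W: "g' W = 0" using G0 Dir_has[OF Gd] by (simp add: g'_def)
  have Fd: "((\<lambda>z. levi \<rho> z (S z) (M z) - cnj (levi \<rho> z (M z) (S z))) has_derivative (\<lambda>h. g2' h - cnj (g' h))) (at p)"
    using has_derivative_diff[OF G2d has_derivative_cnj[OF Gd]] by (simp add: g'_def g2'_def)
  have "g2' W - cnj (g' W) = 0"
  proof (rule TANG0[OF geo p Fd W U(1,2)])
    fix w assume w: "w \<in> U" "w \<in> frontier \<Omega>"
    have "levi \<rho> w (S w) (M w) = cnj (levi \<rho> w (M w) (S w))"
      using levi_herm[of \<rho> w "\<mu> w"] evs w MT ST by blast
    then show "levi \<rho> w (S w) (M w) - cnj (levi \<rho> w (M w) (S w)) = 0" by simp
  qed
  then have "g2' W = 0" using g'W by simp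
  then have "sesq (Dir (Cm \<rho>) p W) a (M p) + sesq (Cm \<rho> p) (Dir S p W) (M p) + sesq (Cm \<rho> p) a (Dir M p W) = 0"
    unfolding g2'_def Sp .
  moreover have "S = (\<lambda>z. PP \<rho> p z a)" by (rule ext) (simp add: S_def)
  ultimately show ?thesis by simp
qed

lemma normal_fact:
  fixes \<rho> :: "complex^'n::finite \<Rightarrow> real"
  assumes evs: "levi_eigenvalues \<rho> p mu" and b: "b \<in> Kker \<rho> p" and v: "tn \<rho> p v = 0"
  shows "sesq (Cm \<rho> p) v b = 0"
proof -
  have vT: "v \<in> T10 \<rho> p" using v by (simp add: T10_tn)
  have bT: "b \<in> T10 \<rho> p" and bK: "levi \<rho> p b v = 0" using b vT by (auto simp: Kker_def)
  have "levi \<rho> p v b = cnj (levi \<rho> p b v)" using levi_herm[OF evs vT bT] .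
  then show ?thesis using bK by (simp add: levi_sesq)
qed


lemma DT_lemma:
  fixes \<rho> :: "complex^'n::finite \<Rightarrow> real"
  assumes evs: "\<forall>z \<in> frontier \<Omega>. levi_eigenvalues \<rho> z (\<mu> z)"
    and gap: "\<forall>z \<in> U \<inter> frontier \<Omega>. \<forall>j < CARD('n) - 1. \<forall>k < CARD('n) - 1.
           \<mu> p k \<noteq> 0 \<longrightarrow> \<mu> p j = 0 \<longrightarrow> \<mu> z k \<noteq> \<mu> z j"
    and DE: "\<forall>z\<in>U \<inter> frontier \<Omega>. D z \<in> cspan {a. \<exists>j < CARD('n) - 1. \<mu> p j = 0 \<and> levi_eigvec \<rho> z (\<mu> z j) a}"
    and z: "z \<in> U" "z \<in> frontier \<Omega>"
  shows "tn \<rho> z (D z) = 0"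
proof -
  obtain ez where ez: "EBz \<rho> z (\<mu> z) ez" using levi_eigenvalues_EB evs z(2) by blast
  have "\<forall>j < CARD('n) - 1. \<forall>k < CARD('n) - 1. \<mu> p k \<noteq> 0 \<longrightarrow> \<mu> p j = 0 \<longrightarrow> \<mu> z k \<noteq> \<mu> z j"
    using gap z by blast
  from Ev_span[OF ez this] have "D z \<in> vec.span (ez ` {k. k < CARD('n) - 1 \<and> \<mu> p k = 0})"
    using DE z by blast
  moreover have "{k. k < CARD('n) - 1 \<and> \<mu> p k = 0} \<subseteq> {..<CARD('n) - 1}" by auto
  ultimately show ?thesis using EB_span_sub[OF ez] by (auto simp: T10_tn)
qed

lemma H1:
  fixes \<rho> :: "complex^'n::finite \<Rightarrow> real" and D M Yf :: "complex^'n \<Rightarrow> complex^'n"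
  assumes geo: "GEO \<Omega> \<rho> V"
    and evs: "\<forall>z \<in> frontier \<Omega>. levi_eigenvalues \<rho> z (\<mu> z)" and p: "p \<in> frontier \<Omega>"
    and U: "open U" "p \<in> U" "U \<subseteq> V"
    and gap: "\<forall>z \<in> U \<inter> frontier \<Omega>. \<forall>j < CARD('n) - 1. \<forall>k < CARD('n) - 1.
           \<mu> p k \<noteq> 0 \<longrightarrow> \<mu> p j = 0 \<longrightarrow> \<mu> z k \<noteq> \<mu> z j"
    and nn: "nn \<rho> p \<noteq> 0" and rvC: "Ck 2 V (rv \<rho>)" and CmC: "Ck 2 V (Cm \<rho>)"
    and DC: "Ck 2 U D" and Dp: "D p = 0"
    and DE: "\<forall>z\<in>U \<inter> frontier \<Omega>. D z \<in> cspan {a. \<exists>j < CARD('n) - 1. \<mu> p j = 0 \<and> levi_eigvec \<rho> z (\<mu> z j) a}"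
    and MC: "Ck 2 U M" and MT: "\<forall>z\<in>U \<inter> frontier \<Omega>. M z \<in> T10 \<rho> z"
    and MK: "M p \<in> KX \<Omega> \<rho> p X \<inter> KX \<Omega> \<rho> p Y"
    and YfC: "Ck 1 U Yf" and Yfp: "Yf p = Y" and YfT: "\<forall>z\<in>U \<inter> frontier \<Omega>. Yf z \<in> Tb \<rho> z"
    and X: "X \<in> Tb \<rho> p" and Y: "Y \<in> Tb \<rho> p"
  shows H1a: "\<And>w. w \<in> Tb \<rho> p \<Longrightarrow> Dir (\<lambda>z. sesq (Cm \<rho> z) (D z) (M z)) p w = 0"
    and H1b: "Dir (\<lambda>z. Dir (\<lambda>z. sesq (Cm \<rho> z) (D z) (M z)) z (Yf z)) p X = 0"
proof -
  have pV: "p \<in> V" using U by auto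
  have UV: "\<And>z. z \<in> U \<Longrightarrow> z \<in> V" using U by auto
  have oV: "open V" using geo by (simp add: GEO_def)
  have rvC1: "Ck 1 V (rv \<rho>)" and CmC1: "Ck 1 V (Cm \<rho>)" and MC1: "Ck 1 U M"
    using Ck2_1 rvC CmC MC by blast+
  have Kp: "Dir D p W \<in> Kker \<rho> p" if "W \<in> Tb \<rho> p" for W
    by (rule KEY[OF geo evs p U gap nn rvC1 CmC1 Ck2_D[OF DC U(2)] Dp DE that])
  have KpT: "tn \<rho> p (Dir D p W) = 0" if "W \<in> Tb \<rho> p" for W
    using Kp[OF that] by (simp add: Kker_def T10_tn)
  have Kb: "M p \<in> Kker \<rho> p" using MK by (simp add: KX_def)
  have evp: "levi_eigenvalues \<rho> p (\<mu> p)" using evs p by blast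
  have Cd: "(Cm \<rho> has_derivative Dir (Cm \<rho>) z) (at z)" if "z \<in> U" for z using Ck2_D[OF CmC UV[OF that]] .
  have Dd: "(D has_derivative Dir D z) (at z)" if "z \<in> U" for z using Ck2_D[OF DC that] .
  have Md: "(M has_derivative Dir M z) (at z)" if "z \<in> U" for z using Ck2_D[OF MC that] .
  have rvd: "(rv \<rho> has_derivative Dir (rv \<rho>) z) (at z)" if "z \<in> V" for z using Ck2_D[OF rvC that] .
  have hd: "((\<lambda>z. sesq (Cm \<rho> z) (D z) (M z)) has_derivative
      (\<lambda>v. sesq (Dir (Cm \<rho>) z v) (D z) (M z) + sesq (Cm \<rho> z) (Dir D z v) (M z) + sesq (Cm \<rho> z) (D z) (Dir M z v))) (at z)"
    if "z \<in> U" for z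
    by (rule sesq_has_derivative[OF Cd[OF that] Dd[OF that] Md[OF that]])
  have hDir: "Dir (\<lambda>z. sesq (Cm \<rho> z) (D z) (M z)) z v =
      sesq (Dir (Cm \<rho>) z v) (D z) (M z) + sesq (Cm \<rho> z) (Dir D z v) (M z) + sesq (Cm \<rho> z) (D z) (Dir M z v)"
    if "z \<in> U" for z v
    using Dir_has[OF hd[OF that]] by simp
  show H1a: "Dir (\<lambda>z. sesq (Cm \<rho> z) (D z) (M z)) p w = 0" if w: "w \<in> Tb \<rho> p" for w
    using hDir[OF U(2), of w] Dp normal_fact[OF evp Kb KpT[OF w]] by simp
  have Ydp: "Yf differentiable (at p)" using YfC U(2) by simp
  have Cdiff: "\<And>z. z \<in> U \<Longrightarrow> Cm \<rho> differentiable (at z)" using Cd differentiable_def by blast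
  have Ddiff: "\<And>z. z \<in> U \<Longrightarrow> D differentiable (at z)" using Dd differentiable_def by blast
  have Mdiff: "\<And>z. z \<in> U \<Longrightarrow> M differentiable (at z)" using Md differentiable_def by blast
  have rvdiff: "\<And>z. z \<in> U \<Longrightarrow> rv \<rho> differentiable (at z)" using rvd UV differentiable_def by blast
  define P1 where "P1 z = Dir (Cm \<rho>) z (Yf z)" for z
  define A where "A z = Dir D z (Yf z)" for z
  define B where "B z = Dir M z (Yf z)" for z
  define Q where "Q z = Dir (rv \<rho>) z (Yf z)" for z
  have P1d: "P1 differentiable (at p)" unfolding P1_def[abs_def]
    by (rule DIRF[OF U(1,2) Cdiff Ck2_DD[OF CmC pV] Ydp])
  have Adf: "A differentiable (at p)" unfolding A_def[abs_def]
    by (rule DIRF[OF U(1,2) Ddiff Ck2_DD[OF DC U(2)] Ydp])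
  have Bdf: "B differentiable (at p)" unfolding B_def[abs_def]
    by (rule DIRF[OF U(1,2) Mdiff Ck2_DD[OF MC U(2)] Ydp])
  have Qdf: "Q differentiable (at p)" unfolding Q_def[abs_def]
    by (rule DIRF[OF U(1,2) rvdiff Ck2_DD[OF rvC pV] Ydp])
  have P1h: "(P1 has_derivative Dir P1 p) (at p)" using P1d by (simp add: Dir_eq frechet_derivative_works[symmetric])
  have Ah: "(A has_derivative Dir A p) (at p)" using Adf by (simp add: Dir_eq frechet_derivative_works[symmetric])
  have Bh: "(B has_derivative Dir B p) (at p)" using Bdf by (simp add: Dir_eq frechet_derivative_works[symmetric])
  have Qh: "(Q has_derivative Dir Q p) (at p)" using Qdf by (simp add: Dir_eq frechet_derivative_works[symmetric])
  define Phi where "Phi z = sesq (P1 z) (D z) (M z) + sesq (Cm \<rho> z) (A z) (M z) + sesq (Cm \<rho> z) (D z) (B z)" for z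
  have YhPhi: "Dir (\<lambda>z. sesq (Cm \<rho> z) (D z) (M z)) z (Yf z) = Phi z" if "z \<in> U" for z
    using hDir[OF that] by (simp add: Phi_def P1_def A_def B_def)
  have eqd: "Dir (\<lambda>z. Dir (\<lambda>z. sesq (Cm \<rho> z) (D z) (M z)) z (Yf z)) p = Dir Phi p"
    by (rule Dir_cong[OF U(1,2)]) (simp add: YhPhi)
  have Phid: "(Phi has_derivative (\<lambda>h.
      (sesq (Dir P1 p h) (D p) (M p) + sesq (P1 p) (Dir D p h) (M p) + sesq (P1 p) (D p) (Dir M p h)) +
      (sesq (Dir (Cm \<rho>) p h) (A p) (M p) + sesq (Cm \<rho> p) (Dir A p h) (M p) + sesq (Cm \<rho> p) (A p) (Dir M p h)) +
      (sesq (Dir (Cm \<rho>) p h) (D p) (B p) + sesq (Cm \<rho> p) (Dir D p h) (B p) + sesq (Cm \<rho> p) (D p) (Dir B p h)))) (at p)"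
    unfolding Phi_def[abs_def]
    by (intro has_derivative_add sesq_has_derivative P1h Ah Bh Dd Md Cd U(2))
  have P1p: "P1 p = Dir (Cm \<rho>) p Y" and Ap: "A p = Dir D p Y" and Bp: "B p = Dir M p Y" and Qp: "Q p = Dir (rv \<rho>) p Y"
    by (simp_all add: P1_def A_def B_def Q_def Yfp)
  define a1 where "a1 = Dir D p X"
  define a2 where "a2 = Dir D p Y"
  define S1 where "S1 = Dir (\<lambda>z. PP \<rho> p z a1) p Y"
  define S2 where "S2 = Dir (\<lambda>z. PP \<rho> p z a2) p X"
  have MKX: "M p \<in> KX \<Omega> \<rho> p X" and MKY: "M p \<in> KX \<Omega> \<rho> p Y" using MK by auto
  have MT': "\<forall>z\<in>U \<inter> frontier \<Omega>. M z \<in> T10 \<rho> z" using MT .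
  have t3a: "sesq (Dir (Cm \<rho>) p Y) a1 (M p) + sesq (Cm \<rho> p) S1 (M p) + sesq (Cm \<rho> p) a1 (Dir M p Y) = 0"
    unfolding S1_def by (rule T3[OF geo evs p U nn rvC1 CmC1 MC1 MT MKY Y]) (simp add: a1_def Kp[OF X])
  have t3b: "sesq (Dir (Cm \<rho>) p X) a2 (M p) + sesq (Cm \<rho> p) S2 (M p) + sesq (Cm \<rho> p) a2 (Dir M p X) = 0"
    unfolding S2_def by (rule T3[OF geo evs p U nn rvC1 CmC1 MC1 MT MKX X]) (simp add: a2_def Kp[OF Y])
  have val: "Dir Phi p X = sesq (Cm \<rho> p) (Dir A p X - S1 - S2) (M p)"
  proof -
    have "Dir Phi p X = sesq (Dir (Cm \<rho>) p Y) a1 (M p) + sesq (Dir (Cm \<rho>) p X) a2 (M p)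
        + sesq (Cm \<rho> p) (Dir A p X) (M p) + sesq (Cm \<rho> p) a2 (Dir M p X) + sesq (Cm \<rho> p) a1 (Dir M p Y)"
      using Dir_has[OF Phid] Dp P1p Ap Bp by (simp add: a1_def a2_def)
    also have "\<dots> = sesq (Cm \<rho> p) (Dir A p X) (M p) - sesq (Cm \<rho> p) S1 (M p) - sesq (Cm \<rho> p) S2 (M p)"
    proof -
      have e1: "sesq (Dir (Cm \<rho>) p Y) a1 (M p) = - sesq (Cm \<rho> p) S1 (M p) - sesq (Cm \<rho> p) a1 (Dir M p Y)"
        using t3a by algebra
      have e2: "sesq (Dir (Cm \<rho>) p X) a2 (M p) = - sesq (Cm \<rho> p) S2 (M p) - sesq (Cm \<rho> p) a2 (Dir M p X)"
        using t3b by algebra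
      show ?thesis unfolding e1 e2 by algebra
    qed
    also have "\<dots> = sesq (Cm \<rho> p) (Dir A p X - S1 - S2) (M p)" by (simp add: sesq_diff2)
    finally show ?thesis .
  qed
  have a1T: "tn \<rho> p a1 = 0" and a2T: "tn \<rho> p a2 = 0" using KpT X Y by (simp_all add: a1_def a2_def)
  have tS: "tn \<rho> p (Dir (\<lambda>z. PP \<rho> p z a) p W) = - (\<Sum>j\<in>UNIV. a $ j * Dir (rv \<rho>) p W $ j)"
    if aT: "tn \<rho> p a = 0" for a W
  proof -
    have SC: "Ck 1 V (\<lambda>z. PP \<rho> p z a)" by (rule Ck_PP[OF oV rvC1])
    have Sd: "((\<lambda>z. PP \<rho> p z a) has_derivative Dir (\<lambda>z. PP \<rho> p z a) p) (at p)" using Ck1_D[OF SC pV] .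
    have "(\<lambda>h. tn \<rho> p (Dir (\<lambda>z. PP \<rho> p z a) p h) + (\<Sum>j\<in>UNIV. PP \<rho> p p a $ j * Dir (rv \<rho>) p h $ j)) W = 0"
      by (rule has_derivative_zero_unique[OF tn_deriv[OF Sd rvd[OF pV]]]) (simp add: PP_T10)
    then show ?thesis using PP_self[OF nn aT] by (simp add: eq_neg_iff_add_eq_0)
  qed
  have tA: "tn \<rho> p (Dir A p X) = - (\<Sum>j\<in>UNIV. a2 $ j * Dir (rv \<rho>) p X $ j) - (\<Sum>j\<in>UNIV. a1 $ j * Dir (rv \<rho>) p Y $ j)"
  proof -
    define Psi where "Psi z = tn \<rho> z (A z) + (\<Sum>j\<in>UNIV. D z $ j * Q z $ j)" for z
    have Psid: "(Psi has_derivative (\<lambda>h. (tn \<rho> p (Dir A p h) + (\<Sum>j\<in>UNIV. A p $ j * Dir (rv \<rho>) p h $ j))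
        + (\<Sum>j\<in>UNIV. D p $ j * Dir Q p h $ j + Dir D p h $ j * Q p $ j))) (at p)"
      unfolding Psi_def[abs_def]
      by (intro has_derivative_add tn_deriv[OF Ah rvd[OF pV]] has_derivative_sum has_derivative_mult hd_nth Dd Qh U(2))
    have Psi0: "Psi w = 0" if w: "w \<in> U" "w \<in> frontier \<Omega>" for w
    proof -
      have tdw: "((\<lambda>z. tn \<rho> z (D z)) has_derivative (\<lambda>h. tn \<rho> w (Dir D w h) + (\<Sum>j\<in>UNIV. D w $ j * Dir (rv \<rho>) w h $ j))) (at w)"
        by (rule tn_deriv[OF Dd[OF w(1)] rvd[OF UV[OF w(1)]]])
      have "(\<lambda>h. tn \<rho> w (Dir D w h) + (\<Sum>j\<in>UNIV. D w $ j * Dir (rv \<rho>) w h $ j)) (Yf w) = 0"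
      proof (rule TANG0[OF geo w(2) tdw _ U(1) w(1)])
        show "Yf w \<in> Tb \<rho> w" using YfT w by blast
        show "\<And>x. x \<in> U \<Longrightarrow> x \<in> frontier \<Omega> \<Longrightarrow> tn \<rho> x (D x) = 0"
          using DT_lemma[OF evs gap DE] by blast
      qed
      then show ?thesis by (simp add: Psi_def A_def Q_def)
    qed
    have "(\<lambda>h. (tn \<rho> p (Dir A p h) + (\<Sum>j\<in>UNIV. A p $ j * Dir (rv \<rho>) p h $ j))
        + (\<Sum>j\<in>UNIV. D p $ j * Dir Q p h $ j + Dir D p h $ j * Q p $ j)) X = 0"
      by (rule TANG0[OF geo p Psid X U(1,2) Psi0])
    then show ?thesis using Dp Ap Qp by (simp add: a1_def a2_def eq_neg_iff_add_eq_0 algebra_simps)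
  qed
  have "tn \<rho> p (Dir A p X - S1 - S2) = 0"
    using tA tS[OF a1T, of Y] tS[OF a2T, of X] by (simp add: tn_diff S1_def S2_def)
  then have "sesq (Cm \<rho> p) (Dir A p X - S1 - S2) (M p) = 0" by (rule normal_fact[OF evp Kb])
  then show "Dir (\<lambda>z. Dir (\<lambda>z. sesq (Cm \<rho> z) (D z) (M z)) z (Yf z)) p X = 0"
    using eqd val by simp
qed


lemma GOOD:
  fixes \<rho> :: "complex^'n::finite \<Rightarrow> real" and A B Yf :: "complex^'n \<Rightarrow> complex^'n"
  assumes U: "open U" "p \<in> U" "U \<subseteq> V" and CmC: "Ck 2 V (Cm \<rho>)"
    and AC: "Ck 2 U A" and BC: "Ck 2 U B" and YfC: "Ck 1 U Yf"
  shows GOODa: "\<And>z. z \<in> U \<Longrightarrow> (\<lambda>z. sesq (Cm \<rho> z) (A z) (B z)) differentiable (at z)"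
    and GOODb: "(\<lambda>z. Dir (\<lambda>z. sesq (Cm \<rho> z) (A z) (B z)) z (Yf z)) differentiable (at p)"
proof -
  have UV: "\<And>z. z \<in> U \<Longrightarrow> z \<in> V" using U by auto
  have Cd: "(Cm \<rho> has_derivative Dir (Cm \<rho>) z) (at z)" if "z \<in> U" for z using Ck2_D[OF CmC UV[OF that]] .
  have Ad: "(A has_derivative Dir A z) (at z)" if "z \<in> U" for z using Ck2_D[OF AC that] .
  have Bd: "(B has_derivative Dir B z) (at z)" if "z \<in> U" for z using Ck2_D[OF BC that] .
  have hd: "((\<lambda>z. sesq (Cm \<rho> z) (A z) (B z)) has_derivative
      (\<lambda>v. sesq (Dir (Cm \<rho>) z v) (A z) (B z) + sesq (Cm \<rho> z) (Dir A z v) (B z) + sesq (Cm \<rho> z) (A z) (Dir B z v))) (at z)"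
    if "z \<in> U" for z
    by (rule sesq_has_derivative[OF Cd[OF that] Ad[OF that] Bd[OF that]])
  show da: "(\<lambda>z. sesq (Cm \<rho> z) (A z) (B z)) differentiable (at z)" if "z \<in> U" for z
    using hd[OF that] differentiable_def by blast
  have hDir: "Dir (\<lambda>z. sesq (Cm \<rho> z) (A z) (B z)) z v =
      sesq (Dir (Cm \<rho>) z v) (A z) (B z) + sesq (Cm \<rho> z) (Dir A z v) (B z) + sesq (Cm \<rho> z) (A z) (Dir B z v)"
    if "z \<in> U" for z v
    using Dir_has[OF hd[OF that]] by simp
  have dd: "(\<lambda>z. Dir (\<lambda>z. sesq (Cm \<rho> z) (A z) (B z)) z b) differentiable (at p)" for b
  proof -
    have h1: "(\<lambda>z. Dir (Cm \<rho>) z b) differentiable (at p)" using Ck2_DD[OF CmC UV[OF U(2)]] .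
    have h2: "(\<lambda>z. Dir A z b) differentiable (at p)" using Ck2_DD[OF AC U(2)] .
    have h3: "(\<lambda>z. Dir B z b) differentiable (at p)" using Ck2_DD[OF BC U(2)] .
    have "(\<lambda>z. sesq (Dir (Cm \<rho>) z b) (A z) (B z) + sesq (Cm \<rho> z) (Dir A z b) (B z) + sesq (Cm \<rho> z) (A z) (Dir B z b))
          differentiable (at p)"
    proof -
      obtain D1 D2 D3 where d: "((\<lambda>z. Dir (Cm \<rho>) z b) has_derivative D1) (at p)"
        "((\<lambda>z. Dir A z b) has_derivative D2) (at p)" "((\<lambda>z. Dir B z b) has_derivative D3) (at p)"
        using h1 h2 h3 unfolding differentiable_def by blast
      note s1 = sesq_has_derivative[OF d(1) Ad[OF U(2)] Bd[OF U(2)]]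
      note s2 = sesq_has_derivative[OF Cd[OF U(2)] d(2) Bd[OF U(2)]]
      note s3 = sesq_has_derivative[OF Cd[OF U(2)] Ad[OF U(2)] d(3)]
      show ?thesis unfolding differentiable_def
        by (rule exI, rule has_derivative_add[OF has_derivative_add[OF s1 s2] s3])
    qed
    then show ?thesis using diff_cong[OF U(1,2)] hDir by (metis (no_types, lifting))
  qed
  show "(\<lambda>z. Dir (\<lambda>z. sesq (Cm \<rho> z) (A z) (B z)) z (Yf z)) differentiable (at p)"
    using DIRF[OF U(1,2) _ dd Ck1_d[OF YfC U(2)]] da by blast
qed

lemma Dir_add4:
  assumes "f1 differentiable (at x)" "f2 differentiable (at x)" "f3 differentiable (at x)" "f4 differentiable (at x)"
  shows "Dir (\<lambda>z. f1 z + f2 z + cnj (f3 z) + f4 z) x v = Dir f1 x v + Dir f2 x v + cnj (Dir f3 x v) + Dir f4 x v"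
proof -
  have d: "(f1 has_derivative Dir f1 x) (at x)" "(f2 has_derivative Dir f2 x) (at x)"
    "(f3 has_derivative Dir f3 x) (at x)" "(f4 has_derivative Dir f4 x) (at x)"
    using assms by (simp_all add: Dir_eq frechet_derivative_works[symmetric])
  have "((\<lambda>z. f1 z + f2 z + cnj (f3 z) + f4 z) has_derivative
        (\<lambda>v. Dir f1 x v + Dir f2 x v + cnj (Dir f3 x v) + Dir f4 x v)) (at x)"
    by (intro has_derivative_add has_derivative_cnj d)
  then show ?thesis by (simp add: Dir_has)
qed


theorem mainTheorem4:
  fixes \<Omega> V U :: "(complex^'n::finite) set"
    and \<rho> :: "complex^'n \<Rightarrow> real"
    and \<mu> :: "complex^'n \<Rightarrow> nat \<Rightarrow> real"
    and p X Y :: "complex^'n"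
    and Xf Yf L L' Lt Lt' :: "complex^'n \<Rightarrow> complex^'n"
  assumes "open \<Omega>" and "connected \<Omega>"
    and "defining_function \<Omega> \<rho> V"
    and "p \<in> frontier \<Omega>"
    and "X \<in> Tb \<rho> p" and "Y \<in> Tb \<rho> p"
    and "\<forall>z \<in> frontier \<Omega>. levi_eigenvalues \<rho> z (\<mu> z)"
    and "open U" and "p \<in> U" and "U \<subseteq> V"
    and "\<forall>z \<in> U \<inter> frontier \<Omega>. \<forall>j < CARD('n) - 1. \<forall>k < CARD('n) - 1.
           \<mu> p k \<noteq> 0 \<longrightarrow> \<mu> p j = 0 \<longrightarrow> \<mu> z k \<noteq> \<mu> z j"
    and "tangent_field \<Omega> \<rho> U Xf" and "Xf p = X"
    and "tangent_field \<Omega> \<rho> U Yf" and "Yf p = Y"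
    and "L \<in> Ktilde \<Omega> \<rho> \<mu> p U" and "L' \<in> Ktilde \<Omega> \<rho> \<mu> p U"
    and "Lt \<in> Ktilde \<Omega> \<rho> \<mu> p U" and "Lt' \<in> Ktilde \<Omega> \<rho> \<mu> p U"
    and "L p = Lt p" and "L' p = Lt' p"
    and "L p \<in> KX \<Omega> \<rho> p X \<inter> KX \<Omega> \<rho> p Y"
    and "L' p \<in> KX \<Omega> \<rho> p X \<inter> KX \<Omega> \<rho> p Y"
  shows "tau4 \<rho> Xf Yf L L' p = tau4 \<rho> Xf Yf Lt Lt' p"
proof -
  note oO = assms(1) and dfn = assms(3) and p = assms(4) and X = assms(5) and Y = assms(6)
    and evs = assms(7) and U = assms(8,9,10) and gap = assms(11) and Xfp = assms(13)
    and Yfp = assms(15) and LK = assms(22) and L'K = assms(23)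
  let ?M = "CARD('n) - 1"
  define Ev where "Ev z = {a. \<exists>j < ?M. \<mu> p j = 0 \<and> levi_eigvec \<rho> z (\<mu> z j) a}" for z
  have oV: "open V" and frV: "frontier \<Omega> \<subseteq> V" and C4: "Ck 4 V \<rho>"
    and sgn: "\<forall>z\<in>V. z \<in> \<Omega> \<longleftrightarrow> \<rho> z < 0" and dn: "\<forall>z\<in>frontier \<Omega>. dnorm \<rho> z = 1"
    using dfn unfolding defining_function_def by blast+
  have C4': "Ck (Suc 3) V \<rho>" using C4 by (simp add: numeral_eq_Suc)
  have rdiff: "\<rho> differentiable (at z)" if "z \<in> V" for z by (rule Ck_Suc_diff[OF C4' that])
  have "Ck 0 V \<rho>" by (rule Ck_le[OF _ C4]) simp
  then have cont: "continuous_on V \<rho>" by simp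
  have geo: "GEO \<Omega> \<rho> V"
    unfolding GEO_def using oO oV frV sgn cont rdiff dnorm_facts(2) dn by blast
  have rv3: "Ck 3 V (rv \<rho>)" by (rule Ck_rv[OF oV C4'])
  have rvC: "Ck 2 V (rv \<rho>)" by (rule Ck_le[OF _ rv3]) simp
  have C4'': "Ck (Suc (Suc 2)) V \<rho>" using C4 by (simp add: numeral_eq_Suc)
  have CmC: "Ck 2 V (Cm \<rho>)" by (rule Ck_Cm[OF oV C4''])
  have pV: "p \<in> V" using U by auto
  have nn: "nn \<rho> p \<noteq> 0" using nn_nz dnorm_facts(1)[OF rdiff[OF pV]] dn p by blast
  have nu: "\<exists>\<nu>. Dir \<rho> p \<nu> = 1" using dnorm_facts(2)[OF rdiff[OF pV]] dn p by blast
  have KT: "\<And>L. L \<in> Ktilde \<Omega> \<rho> \<mu> p U \<Longrightarrow> Ck 2 U L \<and> (\<forall>z\<in>U \<inter> frontier \<Omega>. L z \<in> vec.span (Ev z))"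
    unfolding Ktilde_def Ev_def cspan_vec by blast
  have EvT: "vec.span (Ev z) \<subseteq> T10 \<rho> z" for z
    by (rule vec.span_minimal[OF _ T10_subspace]) (auto simp: Ev_def levi_eigvec_def)
  have LC: "Ck 2 U L" and LE: "\<forall>z\<in>U \<inter> frontier \<Omega>. L z \<in> vec.span (Ev z)" using KT[OF assms(16)] by blast+
  have L'C: "Ck 2 U L'" and L'E: "\<forall>z\<in>U \<inter> frontier \<Omega>. L' z \<in> vec.span (Ev z)" using KT[OF assms(17)] by blast+
  have LtC: "Ck 2 U Lt" and LtE: "\<forall>z\<in>U \<inter> frontier \<Omega>. Lt z \<in> vec.span (Ev z)" using KT[OF assms(18)] by blast+
  have Lt'C: "Ck 2 U Lt'" and Lt'E: "\<forall>z\<in>U \<inter> frontier \<Omega>. Lt' z \<in> vec.span (Ev z)" using KT[OF assms(19)] by blast+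
  have YfC: "Ck 1 U Yf" and YfT: "\<forall>z\<in>U \<inter> frontier \<Omega>. Yf z \<in> Tb \<rho> z"
    using assms(14) by (simp_all add: tangent_field_def del: Ck.simps)
  define D where "D z = L z - Lt z" for z
  define D2 where "D2 z = L' z - Lt' z" for z
  have DC: "Ck 2 U D" unfolding D_def[abs_def] by (rule Ck_minus[OF U(1) LC LtC])
  have D2C: "Ck 2 U D2" unfolding D2_def[abs_def] by (rule Ck_minus[OF U(1) L'C Lt'C])
  have Dp: "D p = 0" and D2p: "D2 p = 0" using assms(20,21) by (simp_all add: D_def D2_def)
  have DE: "\<forall>z\<in>U \<inter> frontier \<Omega>. D z \<in> cspan (Ev z)"
    using LE LtE by (simp add: D_def cspan_vec vec.span_diff)
  have D2E: "\<forall>z\<in>U \<inter> frontier \<Omega>. D2 z \<in> cspan (Ev z)"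
    using L'E Lt'E by (simp add: D2_def cspan_vec vec.span_diff)
  have L'T: "\<forall>z\<in>U \<inter> frontier \<Omega>. L' z \<in> T10 \<rho> z" using L'E EvT by blast
  have LtT: "\<forall>z\<in>U \<inter> frontier \<Omega>. Lt z \<in> T10 \<rho> z" using LtE EvT by blast
  have D2T: "\<forall>z\<in>U \<inter> frontier \<Omega>. D2 z \<in> T10 \<rho> z" using D2E EvT cspan_vec by blast
  have LtK: "Lt p \<in> KX \<Omega> \<rho> p X \<inter> KX \<Omega> \<rho> p Y" using LK assms(20) by simp
  define h1 where "h1 z = sesq (Cm \<rho> z) (D z) (L' z)" for z
  define h2c where "h2c z = sesq (Cm \<rho> z) (D2 z) (Lt z)" for z
  define g where "g z = levi \<rho> z (L z) (L' z)" for z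
  define gt where "gt z = levi \<rho> z (Lt z) (Lt' z)" for z
  define e where "e z = g z - gt z - h1 z - cnj (h2c z)" for z
  define T where "T = tang \<rho> p (Dir Yf p X)"
  have TT: "T \<in> Tb \<rho> p" unfolding T_def using tang_Tb[OF rdiff[OF pV]] nu by blast
  have H1a: "\<And>w. w \<in> Tb \<rho> p \<Longrightarrow> Dir h1 p w = 0" and H1b: "Dir (\<lambda>z. Dir h1 z (Yf z)) p X = 0"
    unfolding h1_def[abs_def]
    using H1[OF geo evs p U gap nn rvC CmC DC Dp DE[unfolded Ev_def] L'C L'T L'K YfC Yfp YfT X Y] by blast+
  have H2a: "\<And>w. w \<in> Tb \<rho> p \<Longrightarrow> Dir h2c p w = 0" and H2b: "Dir (\<lambda>z. Dir h2c z (Yf z)) p X = 0"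
    unfolding h2c_def[abs_def]
    using H1[OF geo evs p U gap nn rvC CmC D2C D2p D2E[unfolded Ev_def] LtC LtT LtK YfC Yfp YfT X Y] by blast+
  have gs: "g = (\<lambda>z. sesq (Cm \<rho> z) (L z) (L' z))" and gts: "gt = (\<lambda>z. sesq (Cm \<rho> z) (Lt z) (Lt' z))"
    by (simp_all add: g_def[abs_def] gt_def[abs_def] levi_sesq)
  have dg: "\<And>z. z \<in> U \<Longrightarrow> g differentiable (at z)" unfolding gs by (rule GOODa[OF U CmC LC L'C YfC])
  have dgt: "\<And>z. z \<in> U \<Longrightarrow> gt differentiable (at z)" unfolding gts by (rule GOODa[OF U CmC LtC Lt'C YfC])
  have dh1: "\<And>z. z \<in> U \<Longrightarrow> h1 differentiable (at z)" unfolding h1_def[abs_def] by (rule GOODa[OF U CmC DC L'C YfC])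
  have dh2: "\<And>z. z \<in> U \<Longrightarrow> h2c differentiable (at z)" unfolding h2c_def[abs_def] by (rule GOODa[OF U CmC D2C LtC YfC])
  have Yg: "(\<lambda>z. Dir g z (Yf z)) differentiable (at p)" unfolding gs by (rule GOODb[OF U CmC LC L'C YfC])
  have Ygt: "(\<lambda>z. Dir gt z (Yf z)) differentiable (at p)" unfolding gts by (rule GOODb[OF U CmC LtC Lt'C YfC])
  have Yh1: "(\<lambda>z. Dir h1 z (Yf z)) differentiable (at p)" unfolding h1_def[abs_def] by (rule GOODb[OF U CmC DC L'C YfC])
  have Yh2: "(\<lambda>z. Dir h2c z (Yf z)) differentiable (at p)" unfolding h2c_def[abs_def] by (rule GOODb[OF U CmC D2C LtC YfC])
  have cnjd: "(\<lambda>z. cnj (f z)) differentiable (at x)" if "f differentiable (at x)" for f :: "complex^'n \<Rightarrow> complex" and x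
    using that has_derivative_cnj unfolding differentiable_def by blast
  have de: "e differentiable (at z)" if "z \<in> U" for z
    unfolding e_def[abs_def] using dg[OF that] dgt[OF that] dh1[OF that] cnjd[OF dh2[OF that]]
    by (intro differentiable_diff) auto
  have gdec: "g = (\<lambda>z. gt z + h1 z + cnj (h2c z) + e z)" by (rule ext) (simp add: e_def)
  have e0: "e z = 0" if "z \<in> U" "z \<in> frontier \<Omega>" for z
  proof -
    have "levi \<rho> z (Lt z) (D2 z) = cnj (levi \<rho> z (D2 z) (Lt z))"
      using levi_herm[of \<rho> z "\<mu> z"] evs that LtT D2T by blast
    then have "sesq (Cm \<rho> z) (Lt z) (D2 z) = cnj (h2c z)" by (simp add: h2c_def levi_sesq)
    moreover have "g z - gt z = h1 z + sesq (Cm \<rho> z) (Lt z) (D2 z)"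
      by (simp add: g_def gt_def h1_def levi_sesq D_def D2_def sesq_diff2 sesq_diff3)
    ultimately show ?thesis by (simp add: e_def)
  qed
  have DirY: "Dir g z (Yf z) = Dir gt z (Yf z) + Dir h1 z (Yf z) + cnj (Dir h2c z (Yf z)) + Dir e z (Yf z)"
    if "z \<in> U" for z
    unfolding gdec by (rule Dir_add4[OF dgt[OF that] dh1[OF that] dh2[OF that] de[OF that]])
  have Ye0: "Dir e z (Yf z) = 0" if "z \<in> U" "z \<in> frontier \<Omega>" for z
    by (rule TANG0D[OF geo that(2) de[OF that(1)] _ U(1) that(1) e0]) (use YfT that in blast)
  have Ye: "(\<lambda>z. Dir e z (Yf z)) differentiable (at p)"
  proof -
    have A: "(\<lambda>z. Dir g z (Yf z) - Dir gt z (Yf z) - Dir h1 z (Yf z) - cnj (Dir h2c z (Yf z))) differentiable (at p)"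
      using Yg Ygt Yh1 cnjd[OF Yh2] by (intro differentiable_diff) auto
    have B: "\<And>z. z \<in> U \<Longrightarrow> Dir g z (Yf z) - Dir gt z (Yf z) - Dir h1 z (Yf z) - cnj (Dir h2c z (Yf z)) = Dir e z (Yf z)"
      using DirY by simp
    show ?thesis by (rule diff_cong[OF U(1,2) _ A]) (rule B)
  qed
  have YeX: "Dir (\<lambda>z. Dir e z (Yf z)) p X = 0"
    by (rule TANG0D[OF geo p Ye X U(1,2) Ye0])
  have eT: "Dir e p T = 0" by (rule TANG0D[OF geo p de[OF U(2)] TT U(1,2) e0])
  have part1: "Dir (\<lambda>z. Dir g z (Yf z)) p X = Dir (\<lambda>z. Dir gt z (Yf z)) p X"
  proof -
    have "Dir (\<lambda>z. Dir g z (Yf z)) p = Dir (\<lambda>z. Dir gt z (Yf z) + Dir h1 z (Yf z) + cnj (Dir h2c z (Yf z)) + Dir e z (Yf z)) p"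
      by (rule Dir_cong[OF U(1,2)]) (simp add: DirY)
    then have "Dir (\<lambda>z. Dir g z (Yf z)) p X = Dir (\<lambda>z. Dir gt z (Yf z)) p X + Dir (\<lambda>z. Dir h1 z (Yf z)) p X
        + cnj (Dir (\<lambda>z. Dir h2c z (Yf z)) p X) + Dir (\<lambda>z. Dir e z (Yf z)) p X"
      using Dir_add4[OF Ygt Yh1 Yh2 Ye] by simp
    then show ?thesis using H1b H2b YeX by simp
  qed
  have part2: "Dir g p T = Dir gt p T"
  proof -
    have "Dir g p T = Dir gt p T + Dir h1 p T + cnj (Dir h2c p T) + Dir e p T"
      unfolding gdec by (rule Dir_add4[OF dgt[OF U(2)] dh1[OF U(2)] dh2[OF U(2)] de[OF U(2)]])
    then show ?thesis using H1a[OF TT] H2a[OF TT] eT by simp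
  qed
  have "tau4 \<rho> Xf Yf L L' p = Dir (\<lambda>z. Dir g z (Yf z)) p X - Dir g p T"
    by (simp add: tau4_def Let_def g_def[abs_def] T_def Xfp)
  also have "\<dots> = Dir (\<lambda>z. Dir gt z (Yf z)) p X - Dir gt p T" using part1 part2 by simp
  also have "\<dots> = tau4 \<rho> Xf Yf Lt Lt' p"
    by (simp add: tau4_def Let_def gt_def[abs_def] T_def Xfp)
  finally show ?thesis .
qed


end
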